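(* In a phase space $Z_2$, the exponential growth rate of an arbitrary solution of the permanent source produced time harmonic perturbation propagation problem (with amplitude in $Z_2$) is equal to zero.
   Context: Fix constants $U_0,c_0,\rho_0>0$, $\omega_f\in\mathbb{R}$, $h$ the Heaviside function. The permanent source produced time harmonic perturbation propagation problem with amplitude $A=(F,G,H,P)$: find $(v_x',v_y',v_z',p')$, zero for $t\le0$, with $\partial_t v_x' + U_0\partial_x v_x' + \frac1{\rho_0}\partial_x p' = h(t)F\sin\omega_f t$, $\partial_t v_y' + U_0\partial_x v_y' + \frac1{\rho_0}\partial_y p' = h(t)G\sin\omega_f t$, $\partial_t v_z' + U_0\partial_x v_z' + \frac1{\rho_0}\partial_z p' = h(t)H\sin\omega_f t$, $\partial_t p' + U_0\partial_xp' + \rho_0c_0^2(\partial_xv_x'+\partial_yv_y'+\partial_zv_z') = h(t)P\sin\omega_f t$. Phase space $Z_2$: fix real constants $k_i,l_i,m_i$ ($i=1,\dots,4$) with $k_1k_2k_3k_4\neq0$ and $\Delta = \frac{c_0\rho_0}{k_3k_4}[r_1(k_2k_3k_4+k_3m_2m_4+k_4l_2l_3) + r_2(k_1k_3k_4+k_3m_1m_4+k_4l_1l_3)]\neq0$, $r_i=\sqrt{k_i^2+l_i^2+m_i^2}$. With $\xi_i=k_ix+l_iy+m_iz$, $Z_2$ is the set of systems $(F,G,H,P)$ of bounded $C^1$ functions on $\mathbb{R}^3$ of the form $F = k_1f_1(\xi_1)+k_2f_2(\xi_2)+\frac{l_3}{k_3}f_3(\xi_3)+\frac{m_4}{k_4}f_4(\xi_4)$,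 $G = l_1f_1(\xi_1)+l_2f_2(\xi_2)-f_3(\xi_3)$, $H = m_1f_1(\xi_1)+m_2f_2(\xi_2)-f_4(\xi_4)$, $P = -c_0\rho_0r_1f_1(\xi_1)+c_0\rho_0r_2f_2(\xi_2)$ with $f_i$ continuously differentiable, normed by the maximum of the sup norms of the components. The exponential growth rate of a solution is $\nu = \max\{\sup_{(x,y,z)}\limsup_{t\to\infty}\frac{\ln|v_x'(x,y,z,t)|}{t},\ \text{same for } v_y',\ v_z',\ p'\}$. *)

theory Defs
  imports "HOL-Analysis.Analysis"
begin

text \<open>Heaviside function (the value at 0 is irrelevant, since sin 0 = 0).\<close>
definition heaviside :: "real \<Rightarrow> real" where
  "heaviside t = (if t \<ge> 0 then 1 else 0)"

definition pdx :: "(real \<Rightarrow> real \<Rightarrow> real \<Rightarrow> real \<Rightarrow> real) \<Rightarrow> real \<Rightarrow> real \<Rightarrow> real \<Rightarrow> real \<Rightarrow> real" where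
  "pdx w x y z t = deriv (\<lambda>s. w s y z t) x"
definition pdy :: "(real \<Rightarrow> real \<Rightarrow> real \<Rightarrow> real \<Rightarrow> real) \<Rightarrow> real \<Rightarrow> real \<Rightarrow> real \<Rightarrow> real \<Rightarrow> real" where
  "pdy w x y z t = deriv (\<lambda>s. w x s z t) y"
definition pdz :: "(real \<Rightarrow> real \<Rightarrow> real \<Rightarrow> real \<Rightarrow> real) \<Rightarrow> real \<Rightarrow> real \<Rightarrow> real \<Rightarrow> real \<Rightarrow> real" where
  "pdz w x y z t = deriv (\<lambda>s. w x y s t) z"
definition pdt :: "(real \<Rightarrow> real \<Rightarrow> real \<Rightarrow> real \<Rightarrow> real) \<Rightarrow> real \<Rightarrow> real \<Rightarrow> real \<Rightarrow> real \<Rightarrow> real" where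
  "pdt w x y z t = deriv (\<lambda>s. w x y z s) t"

definition C1_4 :: "(real \<Rightarrow> real \<Rightarrow> real \<Rightarrow> real \<Rightarrow> real) \<Rightarrow> bool" where
  "C1_4 w \<longleftrightarrow>
     (\<forall>x y z t. (\<lambda>s. w s y z t) differentiable (at x) \<and>
                (\<lambda>s. w x s z t) differentiable (at y) \<and>
                (\<lambda>s. w x y s t) differentiable (at z) \<and>
                (\<lambda>s. w x y z s) differentiable (at t)) \<and>
     continuous_on UNIV (\<lambda>(x,y,z,t). w x y z t) \<and>
     continuous_on UNIV (\<lambda>(x,y,z,t). pdx w x y z t) \<and>
     continuous_on UNIV (\<lambda>(x,y,z,t). pdy w x y z t) \<and>
     continuous_on UNIV (\<lambda>(x,y,z,t). pdz w x y z t) \<and>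
     continuous_on UNIV (\<lambda>(x,y,z,t). pdt w x y z t)"

definition is_solution ::
  "real \<Rightarrow> real \<Rightarrow> real \<Rightarrow> real \<Rightarrow>
   (real \<Rightarrow> real \<Rightarrow> real \<Rightarrow> real) \<Rightarrow> (real \<Rightarrow> real \<Rightarrow> real \<Rightarrow> real) \<Rightarrow>
   (real \<Rightarrow> real \<Rightarrow> real \<Rightarrow> real) \<Rightarrow> (real \<Rightarrow> real \<Rightarrow> real \<Rightarrow> real) \<Rightarrow>
   (real \<Rightarrow> real \<Rightarrow> real \<Rightarrow> real \<Rightarrow> real) \<Rightarrow> (real \<Rightarrow> real \<Rightarrow> real \<Rightarrow> real \<Rightarrow> real) \<Rightarrow>
   (real \<Rightarrow> real \<Rightarrow> real \<Rightarrow> real \<Rightarrow> real) \<Rightarrow> (real \<Rightarrow> real \<Rightarrow> real \<Rightarrow> real \<Rightarrow> real) \<Rightarrow> bool" where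
  "is_solution U0 c0 rho0 omega_f F G H P vx vy vz p \<longleftrightarrow>
     C1_4 vx \<and> C1_4 vy \<and> C1_4 vz \<and> C1_4 p \<and>
     (\<forall>x y z t. t \<le> 0 \<longrightarrow> vx x y z t = 0 \<and> vy x y z t = 0 \<and> vz x y z t = 0 \<and> p x y z t = 0) \<and>
     (\<forall>x y z t.
        pdt vx x y z t + U0 * pdx vx x y z t + (1 / rho0) * pdx p x y z t
          = heaviside t * F x y z * sin (omega_f * t) \<and>
        pdt vy x y z t + U0 * pdx vy x y z t + (1 / rho0) * pdy p x y z t
          = heaviside t * G x y z * sin (omega_f * t) \<and>
        pdt vz x y z t + U0 * pdx vz x y z t + (1 / rho0) * pdz p x y z t
          = heaviside t * H x y z * sin (omega_f * t) \<and>
        pdt p x y z t + U0 * pdx p x y z t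
          + rho0 * c0\<^sup>2 * (pdx vx x y z t + pdy vy x y z t + pdz vz x y z t)
          = heaviside t * P x y z * sin (omega_f * t))"

text \<open>Parameters of Z_2: k, l, m indexed by 1..4.\<close>
definition r_coef :: "(nat \<Rightarrow> real) \<Rightarrow> (nat \<Rightarrow> real) \<Rightarrow> (nat \<Rightarrow> real) \<Rightarrow> nat \<Rightarrow> real" where
  "r_coef k l m i = sqrt ((k i)\<^sup>2 + (l i)\<^sup>2 + (m i)\<^sup>2)"

definition Delta_Z2 :: "real \<Rightarrow> real \<Rightarrow> (nat \<Rightarrow> real) \<Rightarrow> (nat \<Rightarrow> real) \<Rightarrow> (nat \<Rightarrow> real) \<Rightarrow> real" where
  "Delta_Z2 c0 rho0 k l m =
     c0 * rho0 / (k 3 * k 4) *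
       (r_coef k l m 1 * (k 2 * k 3 * k 4 + k 3 * m 2 * m 4 + k 4 * l 2 * l 3)
      + r_coef k l m 2 * (k 1 * k 3 * k 4 + k 3 * m 1 * m 4 + k 4 * l 1 * l 3))"

definition in_Z2 ::
  "real \<Rightarrow> real \<Rightarrow> (nat \<Rightarrow> real) \<Rightarrow> (nat \<Rightarrow> real) \<Rightarrow> (nat \<Rightarrow> real) \<Rightarrow>
   (real \<Rightarrow> real \<Rightarrow> real \<Rightarrow> real) \<Rightarrow> (real \<Rightarrow> real \<Rightarrow> real \<Rightarrow> real) \<Rightarrow>
   (real \<Rightarrow> real \<Rightarrow> real \<Rightarrow> real) \<Rightarrow> (real \<Rightarrow> real \<Rightarrow> real \<Rightarrow> real) \<Rightarrow> bool" where
  "in_Z2 c0 rho0 k l m F G H P \<longleftrightarrow>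
     bounded (range (\<lambda>(x,y,z). F x y z)) \<and> bounded (range (\<lambda>(x,y,z). G x y z)) \<and>
     bounded (range (\<lambda>(x,y,z). H x y z)) \<and> bounded (range (\<lambda>(x,y,z). P x y z)) \<and>
     (\<exists>f :: nat \<Rightarrow> real \<Rightarrow> real.
        (\<forall>i\<in>{1..4}. f i C1_differentiable_on UNIV) \<and>
        (\<forall>x y z.
           let \<xi> = (\<lambda>i. k i * x + l i * y + m i * z) in
           F x y z = k 1 * f 1 (\<xi> 1) + k 2 * f 2 (\<xi> 2) + l 3 / k 3 * f 3 (\<xi> 3) + m 4 / k 4 * f 4 (\<xi> 4) \<and>
           G x y z = l 1 * f 1 (\<xi> 1) + l 2 * f 2 (\<xi> 2) - f 3 (\<xi> 3) \<and>
           H x y z = m 1 * f 1 (\<xi> 1) + m 2 * f 2 (\<xi> 2) - f 4 (\<xi> 4) \<and>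
           P x y z = - c0 * rho0 * r_coef k l m 1 * f 1 (\<xi> 1) + c0 * rho0 * r_coef k l m 2 * f 2 (\<xi> 2)))"

text \<open>Exponential growth rate of one component (extended real; Isabelle's ln 0 = 0).\<close>
definition comp_growth :: "(real \<Rightarrow> real \<Rightarrow> real \<Rightarrow> real \<Rightarrow> real) \<Rightarrow> ereal" where
  "comp_growth w = (SUP q \<in> (UNIV :: (real \<times> real \<times> real) set).
       (case q of (x,y,z) \<Rightarrow> Limsup at_top (\<lambda>t. ereal (ln \<bar>w x y z t\<bar> / t))))"

definition growth_rate ::
  "(real \<Rightarrow> real \<Rightarrow> real \<Rightarrow> real \<Rightarrow> real) \<Rightarrow> (real \<Rightarrow> real \<Rightarrow> real \<Rightarrow> real \<Rightarrow> real) \<Rightarrow>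
   (real \<Rightarrow> real \<Rightarrow> real \<Rightarrow> real \<Rightarrow> real) \<Rightarrow> (real \<Rightarrow> real \<Rightarrow> real \<Rightarrow> real \<Rightarrow> real) \<Rightarrow> ereal" where
  "growth_rate vx vy vz p =
     max (max (comp_growth vx) (comp_growth vy)) (max (comp_growth vz) (comp_growth p))"

end

theory Submission
  imports Defs
begin

definition cont4 :: "(real \<Rightarrow> real \<Rightarrow> real \<Rightarrow> real \<Rightarrow> real) \<Rightarrow> bool" where
  "cont4 g \<longleftrightarrow> continuous_on UNIV (\<lambda>v. g (fst v) (fst (snd v)) (fst (snd (snd v))) (snd (snd (snd v))))"

lemma cont4_C1: "continuous_on UNIV (\<lambda>(x,y,z,t). g x y z t) \<longleftrightarrow> cont4 g"
  unfolding cont4_def by (simp add: case_prod_beta)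

lemma cont4_add[intro]: "cont4 f \<Longrightarrow> cont4 g \<Longrightarrow> cont4 (\<lambda>x y z t. f x y z t + g x y z t)"
  unfolding cont4_def by (intro continuous_intros)
lemma cont4_diff[intro]: "cont4 f \<Longrightarrow> cont4 g \<Longrightarrow> cont4 (\<lambda>x y z t. f x y z t - g x y z t)"
  unfolding cont4_def by (intro continuous_intros)
lemma cont4_mult[intro]: "cont4 f \<Longrightarrow> cont4 g \<Longrightarrow> cont4 (\<lambda>x y z t. f x y z t * g x y z t)"
  unfolding cont4_def by (intro continuous_intros)
lemma cont4_const[intro]: "cont4 (\<lambda>x y z t. c)"
  unfolding cont4_def by (intro continuous_intros)
lemma cont4_x[intro]: "cont4 (\<lambda>x y z t. x)"
  unfolding cont4_def by (intro continuous_intros)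
lemma cont4_y[intro]: "cont4 (\<lambda>x y z t. y)"
  unfolding cont4_def by (intro continuous_intros)
lemma cont4_z[intro]: "cont4 (\<lambda>x y z t. z)"
  unfolding cont4_def by (intro continuous_intros)
lemma cont4_t[intro]: "cont4 (\<lambda>x y z t. t)"
  unfolding cont4_def by (intro continuous_intros)
lemma cont4_comp[intro]: "continuous_on UNIV h \<Longrightarrow> cont4 f \<Longrightarrow> cont4 (\<lambda>x y z t. h (f x y z t))"
  unfolding cont4_def by (rule continuous_on_compose2[where t=UNIV]) auto

lemma cont4_fix_t:
  assumes "cont4 f" shows "continuous_on S (\<lambda>p. f (fst p) (fst (snd p)) (snd (snd p)) t)"
proof -
  let ?h = "\<lambda>v. f (fst v) (fst (snd v)) (fst (snd (snd v))) (snd (snd (snd v)))"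
  let ?g = "\<lambda>p::real\<times>real\<times>real. (fst p, fst (snd p), snd (snd p), t)"
  have "continuous_on S (?h \<circ> ?g)"
    by (rule continuous_on_compose, intro continuous_intros, rule continuous_on_subset[OF assms[unfolded cont4_def]]) auto
  then show ?thesis by (simp add: o_def)
qed

lemma cont4_tp:
  assumes "cont4 f" shows "continuous_on S (\<lambda>(t,p). f (fst p) (fst (snd p)) (snd (snd p)) t)"
proof -
  let ?h = "\<lambda>v. f (fst v) (fst (snd v)) (fst (snd (snd v))) (snd (snd (snd v)))"
  let ?g = "\<lambda>tp::real\<times>real\<times>real\<times>real. (fst (snd tp), fst (snd (snd tp)), snd (snd (snd tp)), fst tp)"
  have "continuous_on S (?h \<circ> ?g)"
    by (rule continuous_on_compose, intro continuous_intros, rule continuous_on_subset[OF assms[unfolded cont4_def]]) auto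
  then show ?thesis by (simp add: o_def case_prod_beta)
qed


lemma cont4_pow2[intro]: "cont4 f \<Longrightarrow> cont4 (\<lambda>x y z t. (f x y z t)^2)"
  unfolding cont4_def by (intro continuous_intros)
lemma cont4_divc[intro]: "cont4 f \<Longrightarrow> cont4 (\<lambda>x y z t. f x y z t / c)"
  unfolding cont4_def divide_inverse by (intro continuous_intros)
lemma cont4_uminus[intro]: "cont4 f \<Longrightarrow> cont4 (\<lambda>x y z t. - f x y z t)"
  unfolding cont4_def by (intro continuous_intros)

lemma cont4_integrable: "cont4 f \<Longrightarrow> (\<lambda>p. f (fst p) (fst (snd p)) (snd (snd p)) t) integrable_on cbox a b"
  by (rule integrable_continuous, rule cont4_fix_t)

definition P4 where
  "P4 g gx gy gz gt \<longleftrightarrow>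
     (\<forall>x y z t. ((\<lambda>s. g s y z t) has_real_derivative gx x y z t) (at x) \<and>
                ((\<lambda>s. g x s z t) has_real_derivative gy x y z t) (at y) \<and>
                ((\<lambda>s. g x y s t) has_real_derivative gz x y z t) (at z) \<and>
                ((\<lambda>s. g x y z s) has_real_derivative gt x y z t) (at t)) \<and>
     cont4 g \<and> cont4 gx \<and> cont4 gy \<and> cont4 gz \<and> cont4 gt"

lemma P4_C1: "C1_4 w \<Longrightarrow> P4 w (pdx w) (pdy w) (pdz w) (pdt w)"
  unfolding C1_4_def P4_def cont4_C1[symmetric] pdx_def pdy_def pdz_def pdt_def
  by (simp add: DERIV_deriv_iff_real_differentiable)

lemma P4_lin:
  assumes "P4 f fx fy fz ft" "P4 g gx gy gz gt"
  shows "P4 (\<lambda>x y z t. a * f x y z t + b * g x y z t)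
     (\<lambda>x y z t. a * fx x y z t + b * gx x y z t) (\<lambda>x y z t. a * fy x y z t + b * gy x y z t)
     (\<lambda>x y z t. a * fz x y z t + b * gz x y z t) (\<lambda>x y z t. a * ft x y z t + b * gt x y z t)"
  using assms unfolding P4_def by (auto intro!: derivative_eq_intros cont4_add cont4_diff cont4_mult cont4_const)

lemma P4_zero: "P4 (\<lambda>x y z t. 0) (\<lambda>x y z t. 0) (\<lambda>x y z t. 0) (\<lambda>x y z t. 0) (\<lambda>x y z t. 0)"
  unfolding P4_def by auto

lemma P4_diff:
  assumes "P4 f fx fy fz ft" "P4 g gx gy gz gt"
  shows "P4 (\<lambda>x y z t. f x y z t - g x y z t)
     (\<lambda>x y z t. fx x y z t - gx x y z t) (\<lambda>x y z t. fy x y z t - gy x y z t)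
     (\<lambda>x y z t. fz x y z t - gz x y z t) (\<lambda>x y z t. ft x y z t - gt x y z t)"
  using assms unfolding P4_def by (auto intro!: derivative_eq_intros cont4_add cont4_diff cont4_mult cont4_const)

lemma ftc0:
  fixes G g :: "real \<Rightarrow> real"
  assumes "\<And>x. (G has_real_derivative g x) (at x)" "a \<le> b" "G a = 0" "G b = 0"
  shows "integral (cbox a b) g = 0"
proof -
  have "(g has_integral (G b - G a)) {a..b}"
    by (rule fundamental_theorem_of_calculus[OF assms(2)])
       (auto intro: has_field_derivative_at_within assms(1) simp: has_real_derivative_iff_has_vector_derivative[symmetric])
  then show ?thesis using assms by (simp add: integral_unique)
qed

lemma int_dx_zero:
  fixes G g :: "real \<Rightarrow> real \<Rightarrow> real \<Rightarrow> real"
  assumes der: "\<And>x y z. ((\<lambda>s. G s y z) has_real_derivative g x y z) (at x)"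
    and cont: "continuous_on UNIV (\<lambda>p. g (fst p) (fst (snd p)) (snd (snd p)))"
    and bd: "\<And>y z. G (-M) y z = 0" "\<And>y z. G M y z = 0" and M: "M \<ge> 0"
  shows "integral (cbox (-M,-M,-M) (M,M,M)) (\<lambda>p. g (fst p) (fst (snd p)) (snd (snd p))) = 0"
proof -
  have c2: "continuous_on S (\<lambda>(x, w). g x (fst w) (snd w))" for S
    using continuous_on_subset[OF cont] by (simp add: case_prod_beta)
  have "integral (cbox (-M,-M,-M) (M,M,M)) (\<lambda>p. g (fst p) (fst (snd p)) (snd (snd p)))
     = integral (cbox (-M) M) (\<lambda>x. integral (cbox (-M,-M) (M,M)) (\<lambda>w. g x (fst w) (snd w)))"
    using integral_prod_continuous[of "-M" "(-M,-M)" M "(M,M)" "\<lambda>p. g (fst p) (fst (snd p)) (snd (snd p))"]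
      continuous_on_subset[OF cont] by simp
  also have "\<dots> = integral (cbox (-M,-M) (M,M)) (\<lambda>w. integral (cbox (-M) M) (\<lambda>x. g x (fst w) (snd w)))"
    by (rule integral_swap_continuous) (use c2 in auto)
  also have "\<dots> = integral (cbox (-M,-M) (M,M)) (\<lambda>w. 0)"
  proof (rule integral_cong)
    fix w :: "real \<times> real"
    show "integral (cbox (-M) M) (\<lambda>x. g x (fst w) (snd w)) = 0"
      by (rule ftc0[where G="\<lambda>s. G s (fst w) (snd w)"]) (use der bd M in auto)
  qed
  finally show ?thesis by simp
qed

lemma int_dy_zero:
  fixes G g :: "real \<Rightarrow> real \<Rightarrow> real \<Rightarrow> real"
  assumes der: "\<And>x y z. ((\<lambda>s. G x s z) has_real_derivative g x y z) (at y)"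
    and cont: "continuous_on UNIV (\<lambda>p. g (fst p) (fst (snd p)) (snd (snd p)))"
    and bd: "\<And>x z. G x (-M) z = 0" "\<And>x z. G x M z = 0" and M: "M \<ge> 0"
  shows "integral (cbox (-M,-M,-M) (M,M,M)) (\<lambda>p. g (fst p) (fst (snd p)) (snd (snd p))) = 0"
proof -
  have "integral (cbox (-M,-M,-M) (M,M,M)) (\<lambda>p. g (fst p) (fst (snd p)) (snd (snd p)))
     = integral (cbox (-M) M) (\<lambda>x. integral (cbox (-M,-M) (M,M)) (\<lambda>w. g x (fst w) (snd w)))"
    using integral_prod_continuous[of "-M" "(-M,-M)" M "(M,M)" "\<lambda>p. g (fst p) (fst (snd p)) (snd (snd p))"]
      continuous_on_subset[OF cont] by simp
  also have "\<dots> = integral (cbox (-M) M) (\<lambda>x. 0)"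
  proof (rule integral_cong)
    fix x
    have cx: "continuous_on S (\<lambda>w. g x (fst w) (snd w))" for S
    proof -
      have "continuous_on S ((\<lambda>p. g (fst p) (fst (snd p)) (snd (snd p))) \<circ> (\<lambda>w. (x, w)))"
        by (rule continuous_on_compose, intro continuous_intros, rule continuous_on_subset[OF cont]) auto
      then show ?thesis by (simp add: o_def)
    qed
    have "integral (cbox (-M,-M) (M,M)) (\<lambda>w. g x (fst w) (snd w))
        = integral (cbox (-M) M) (\<lambda>y. integral (cbox (-M) M) (\<lambda>z. g x y z))"
      using integral_prod_continuous[of "-M" "-M" M M "\<lambda>w. g x (fst w) (snd w)"] cx by simp
    also have "\<dots> = integral (cbox (-M) M) (\<lambda>z. integral (cbox (-M) M) (\<lambda>y. g x y z))"
      by (rule integral_swap_continuous) (use cx[of "cbox (-M, -M) (M, M)"] in \<open>simp add: case_prod_beta\<close>)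
    also have "\<dots> = integral (cbox (-M) M) (\<lambda>z. 0)"
    proof (rule integral_cong)
      fix z
      show "integral (cbox (-M) M) (\<lambda>y. g x y z) = 0"
        by (rule ftc0[where G="\<lambda>s. G x s z"]) (use der bd M in auto)
    qed
    finally show "integral (cbox (-M,-M) (M,M)) (\<lambda>w. g x (fst w) (snd w)) = 0" by simp
  qed
  finally show ?thesis by simp
qed

lemma int_dz_zero:
  fixes G g :: "real \<Rightarrow> real \<Rightarrow> real \<Rightarrow> real"
  assumes der: "\<And>x y z. ((\<lambda>s. G x y s) has_real_derivative g x y z) (at z)"
    and cont: "continuous_on UNIV (\<lambda>p. g (fst p) (fst (snd p)) (snd (snd p)))"
    and bd: "\<And>x y. G x y (-M) = 0" "\<And>x y. G x y M = 0" and M: "M \<ge> 0"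
  shows "integral (cbox (-M,-M,-M) (M,M,M)) (\<lambda>p. g (fst p) (fst (snd p)) (snd (snd p))) = 0"
proof -
  have "integral (cbox (-M,-M,-M) (M,M,M)) (\<lambda>p. g (fst p) (fst (snd p)) (snd (snd p)))
     = integral (cbox (-M) M) (\<lambda>x. integral (cbox (-M,-M) (M,M)) (\<lambda>w. g x (fst w) (snd w)))"
    using integral_prod_continuous[of "-M" "(-M,-M)" M "(M,M)" "\<lambda>p. g (fst p) (fst (snd p)) (snd (snd p))"]
      continuous_on_subset[OF cont] by simp
  also have "\<dots> = integral (cbox (-M) M) (\<lambda>x. 0)"
  proof (rule integral_cong)
    fix x
    have cx: "continuous_on S (\<lambda>w. g x (fst w) (snd w))" for S
    proof -
      have "continuous_on S ((\<lambda>p. g (fst p) (fst (snd p)) (snd (snd p))) \<circ> (\<lambda>w. (x, w)))"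
        by (rule continuous_on_compose, intro continuous_intros, rule continuous_on_subset[OF cont]) auto
      then show ?thesis by (simp add: o_def)
    qed
    have "integral (cbox (-M,-M) (M,M)) (\<lambda>w. g x (fst w) (snd w))
        = integral (cbox (-M) M) (\<lambda>y. integral (cbox (-M) M) (\<lambda>z. g x y z))"
      using integral_prod_continuous[of "-M" "-M" M M "\<lambda>w. g x (fst w) (snd w)"] cx by simp
    also have "\<dots> = integral (cbox (-M) M) (\<lambda>y. 0)"
    proof (rule integral_cong)
      fix y
      show "integral (cbox (-M) M) (\<lambda>z. g x y z) = 0"
        by (rule ftc0[where G="\<lambda>s. G x y s"]) (use der bd M in auto)
    qed
    finally show "integral (cbox (-M,-M) (M,M)) (\<lambda>w. g x (fst w) (snd w)) = 0" by simp
  qed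
  finally show ?thesis by simp
qed

definition theta :: "real \<Rightarrow> real" where "theta s = (max s 0)^2"
definition dtheta :: "real \<Rightarrow> real" where "dtheta s = 2 * max s 0"

lemma theta_deriv: "(theta has_real_derivative dtheta s) (at s)"
proof (cases "s = 0")
  case True
  have "((\<lambda>y. (theta y - theta 0) / (y - 0)) \<longlongrightarrow> 0) (at 0)"
  proof (rule Lim_null_comparison)
    show "\<forall>\<^sub>F y in at 0. norm ((theta y - theta 0) / (y - 0)) \<le> \<bar>y\<bar>"
      by (auto simp: theta_def max_def abs_mult power2_eq_square divide_simps intro!: always_eventually)
    show "((\<lambda>y::real. \<bar>y\<bar>) \<longlongrightarrow> 0) (at 0)"
      using tendsto_rabs[OF tendsto_ident_at[of 0 UNIV]] by simp
  qed
  then show ?thesis using True by (simp add: has_field_derivative_iff dtheta_def)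
next
  case False
  show ?thesis
  proof (cases "s > 0")
    case True
    have "((\<lambda>y. y^2) has_real_derivative 2 * s) (at s)" by (auto intro!: derivative_eq_intros)
    moreover have "dtheta s = 2 * s" using True by (simp add: dtheta_def)
    ultimately have "((\<lambda>y. y^2) has_real_derivative dtheta s) (at s)" by simp
    then show ?thesis
      by (rule has_field_derivative_transform_within_open[where S="{0<..}"]) (use True in \<open>auto simp: theta_def dtheta_def\<close>)
  next
    case False2: False
    with False have "s < 0" by auto
    have "((\<lambda>y. 0) has_real_derivative 0) (at s)" by auto
    moreover have "dtheta s = 0" using \<open>s<0\<close> by (simp add: dtheta_def)
    ultimately have "((\<lambda>y. 0) has_real_derivative dtheta s) (at s)" by simp
    then show ?thesis
      by (rule has_field_derivative_transform_within_open[where S="{..<0}"]) (use \<open>s<0\<close> in \<open>auto simp: theta_def dtheta_def\<close>)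
  qed
qed

lemma cont_theta: "continuous_on UNIV theta"
  unfolding theta_def by (intro continuous_intros)
lemma cont_dtheta: "continuous_on UNIV dtheta"
  unfolding dtheta_def by (intro continuous_intros)
lemma theta_nonneg: "theta s \<ge> 0" by (simp add: theta_def)
lemma dtheta_nonneg: "dtheta s \<ge> 0" by (simp add: dtheta_def)
lemma theta_zero: "s \<le> 0 \<Longrightarrow> theta s = 0" by (simp add: theta_def)
lemma theta_pos: "s > 0 \<Longrightarrow> theta s > 0" by (simp add: theta_def)
lemma dtheta_pos: "dtheta s \<noteq> 0 \<Longrightarrow> s > 0" by (simp add: dtheta_def max_def split: if_splits)

lemma amgm_ineq:
  fixes a R q S D :: real
  assumes a: "a > 0" and R: "R > 0" and SD: "S^2 \<le> R^2 * D"
  shows "2 * \<bar>q * S\<bar> \<le> R * (a * D + q^2 / a)"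
proof -
  have "0 \<le> (a * \<bar>S\<bar> - R * \<bar>q\<bar>)^2" by simp
  then have h: "2 * a * R * \<bar>q * S\<bar> \<le> a^2 * S^2 + R^2 * q^2"
    by (simp add: power2_eq_square algebra_simps abs_mult)
  have "a^2 * S^2 \<le> a^2 * (R^2 * D)" using SD by (simp add: mult_left_mono)
  with h have "2 * a * R * \<bar>q * S\<bar> \<le> a^2 * (R^2 * D) + R^2 * q^2" by linarith
  also have "\<dots> = (a * R) * (R * (a * D + q^2 / a))" using a by (simp add: field_simps power2_eq_square)
  finally have "(a * R) * (2 * \<bar>q * S\<bar>) \<le> (a * R) * (R * (a * D + q^2 / a))" by (simp add: algebra_simps)
  then show ?thesis using a R by (simp add: mult_le_cancel_left_pos)
qed

lemma cs3:
  fixes X y z d1 d2 d3 :: real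
  shows "(X * d1 + y * d2 + z * d3)^2 \<le> (X^2 + y^2 + z^2) * (d1^2 + d2^2 + d3^2)"
proof -
  have "(X^2 + y^2 + z^2) * (d1^2 + d2^2 + d3^2) - (X * d1 + y * d2 + z * d3)^2
      = (X * d2 - y * d1)^2 + (X * d3 - z * d1)^2 + (y * d3 - z * d2)^2"
    by (simp add: power2_eq_square algebra_simps)
  moreover have "(X * d2 - y * d1)^2 + (X * d3 - z * d1)^2 + (y * d3 - z * d2)^2 \<ge> 0" by simp
  ultimately show ?thesis by linarith
qed

lemma rr_aux:
  fixes X y z d1 d2 d3 q :: real
  assumes rho: "rho > 0" and c: "c > 0" and R: "R > 0"
    and r2: "X^2 + y^2 + z^2 \<le> R^2"
  shows "- (2*c*R) * (d1^2 + d2^2 + d3^2 + (1/(rho*c)^2) * q^2) - 2 * (2/rho) * q * (X * d1 + y * d2 + z * d3) \<le> 0"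
proof -
  define a where "a = rho * c"
  have a: "a > 0" using rho c by (simp add: a_def)
  define D where "D = d1^2 + d2^2 + d3^2"
  define S where "S = X * d1 + y * d2 + z * d3"
  have D0: "D \<ge> 0" by (simp add: D_def)
  have "S^2 \<le> (X^2 + y^2 + z^2) * D" unfolding S_def D_def by (rule cs3)
  also have "\<dots> \<le> R^2 * D" using r2 D0 by (rule mult_right_mono)
  finally have SD: "S^2 \<le> R^2 * D" .
  have am: "2 * \<bar>q * S\<bar> \<le> R * (a * D + q^2 / a)"
    by (rule amgm_ineq[OF a R SD])
  have br0: "2/rho > 0" using rho by simp
  have "(2/rho) * (2 * \<bar>q * S\<bar>) \<le> (2/rho) * (R * (a * D + q^2 / a))"
    using am br0 by (simp only: mult_left_mono less_imp_le)
  also have "(2/rho) * (R * (a * D + q^2 / a)) = (2*c*R) * (D + (1/(rho*c)^2) * q^2)"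
    unfolding a_def using rho c
    by (simp add: field_simps power2_eq_square)
  finally have k: "2 * (2/rho) * \<bar>q * S\<bar> \<le> (2*c*R) * (D + (1/(rho*c)^2) * q^2)" by simp
  have "- (2 * (2/rho) * (q * S)) \<le> 2 * (2/rho) * \<bar>q * S\<bar>"
    using br0 by (simp add: abs_if)
  have lin: "\<And>u v w::real. -u \<le> v \<Longrightarrow> v \<le> w \<Longrightarrow> -w - u \<le> 0" by linarith
  note k
  moreover note \<open>- (2 * (2/rho) * (q * S)) \<le> 2 * (2/rho) * \<bar>q * S\<bar>\<close>
  ultimately have "- (2*c*R) * (D + (1/(rho*c)^2) * q^2) - 2 * (2/rho) * q * S \<le> 0"
    apply (simp only: mult.assoc mult_minus_left)
    apply (rule lin)
    apply assumption+
    done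
  then show ?thesis by (simp only: D_def S_def)
qed
lemma box3_ne: "M > 0 \<Longrightarrow> box (-M,-M,-M) (M,M,M::real) \<noteq> {}"
  by (auto simp: box_ne_empty Basis_prod_def)
lemma cbox3_mem: "\<bar>x\<bar> \<le> M \<Longrightarrow> \<bar>y\<bar> \<le> M \<Longrightarrow> \<bar>z\<bar> \<le> M \<Longrightarrow> (x,y,z) \<in> cbox (-M,-M,-M) (M,M,M::real)"
  by auto

lemma cont4_theta[intro]: "cont4 f \<Longrightarrow> cont4 (\<lambda>x y z t. theta (f x y z t))"
  by (rule cont4_comp[OF cont_theta])
lemma cont4_dtheta[intro]: "cont4 f \<Longrightarrow> cont4 (\<lambda>x y z t. dtheta (f x y z t))"
  by (rule cont4_comp[OF cont_dtheta])

lemmas c4I = cont4_add cont4_diff cont4_mult cont4_const cont4_x cont4_y cont4_z cont4_t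
  cont4_pow2 cont4_divc cont4_uminus cont4_theta cont4_dtheta

lemma energy_unique:
  fixes d1 d2 d3 q d1x d1y d1z d1t d2x d2y d2z d2t d3x d3y d3z d3t qx qy qz qt
    :: "real \<Rightarrow> real \<Rightarrow> real \<Rightarrow> real \<Rightarrow> real"
  assumes c: "c > 0" and rho: "rho > 0"
    and P1: "P4 d1 d1x d1y d1z d1t" and P2: "P4 d2 d2x d2y d2z d2t"
    and P3: "P4 d3 d3x d3y d3z d3t" and PQ: "P4 q qx qy qz qt"
    and pde1: "\<And>x y z t. t \<ge> 0 \<Longrightarrow> d1t x y z t + vU * d1x x y z t + (1/rho) * qx x y z t = 0"
    and pde2: "\<And>x y z t. t \<ge> 0 \<Longrightarrow> d2t x y z t + vU * d2x x y z t + (1/rho) * qy x y z t = 0"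
    and pde3: "\<And>x y z t. t \<ge> 0 \<Longrightarrow> d3t x y z t + vU * d3x x y z t + (1/rho) * qz x y z t = 0"
    and pdeq: "\<And>x y z t. t \<ge> 0 \<Longrightarrow> qt x y z t + vU * qx x y z t
                 + rho * c^2 * (d1x x y z t + d2y x y z t + d3z x y z t) = 0"
    and init: "\<And>x y z. d1 x y z 0 = 0 \<and> d2 x y z 0 = 0 \<and> d3 x y z 0 = 0 \<and> q x y z 0 = 0"
    and t0: "t0 \<ge> 0"
  shows "d1 x0 y0 z0 t0 = 0 \<and> d2 x0 y0 z0 t0 = 0 \<and> d3 x0 y0 z0 t0 = 0 \<and> q x0 y0 z0 t0 = 0"
proof -
  define a where "a = rho * c"
  have a: "a > 0" using c rho by (simp add: a_def)
  define R where "R = 2*c*t0 + \<bar>x0 - vU*t0\<bar> + \<bar>y0\<bar> + \<bar>z0\<bar> + 1"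
  have R: "R > 0"
  proof -
    have "2*c*t0 \<ge> 0" using c t0 by simp
    then show ?thesis unfolding R_def
      using abs_ge_zero[of "x0-vU*t0"] abs_ge_zero[of y0] abs_ge_zero[of z0] by linarith
  qed
  define al where "al = 2*c*R"
  have al: "al > 0" using c R by (simp add: al_def)
  define M where "M = R + \<bar>vU\<bar> * R / (2*c) + 1"
  have MR: "M \<ge> R + 1" using c R by (simp add: M_def)
  define ka where "ka = 1 / a^2"
  have ka: "ka > 0" using a by (simp add: ka_def)
  define br where "br = 2 / rho"
  define s where "s x y z t = R^2 - al*t - ((x - vU*t)^2 + y^2 + z^2)" for x y z t :: real
  define e where "e x y z t = (d1 x y z t)^2 + (d2 x y z t)^2 + (d3 x y z t)^2 + ka * (q x y z t)^2"
    for x y z t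
  define ex where "ex x y z t = 2 * d1 x y z t * d1x x y z t + 2 * d2 x y z t * d2x x y z t
      + 2 * d3 x y z t * d3x x y z t + 2 * ka * q x y z t * qx x y z t" for x y z t
  define et where "et x y z t = 2 * d1 x y z t * d1t x y z t + 2 * d2 x y z t * d2t x y z t
      + 2 * d3 x y z t * d3t x y z t + 2 * ka * q x y z t * qt x y z t" for x y z t
  define chi where "chi x y z t = theta (s x y z t)" for x y z t
  define chix where "chix x y z t = dtheta (s x y z t) * (-2 * (x - vU*t))" for x y z t
  define chiy where "chiy x y z t = dtheta (s x y z t) * (-2 * y)" for x y z t
  define chiz where "chiz x y z t = dtheta (s x y z t) * (-2 * z)" for x y z t
  define chit where "chit x y z t = dtheta (s x y z t) * (2 * vU * (x - vU*t) - al)" for x y z t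
  define H where "H x y z t = chi x y z t * e x y z t" for x y z t
  define Ht where "Ht x y z t = chit x y z t * e x y z t + chi x y z t * et x y z t" for x y z t
  define G1 where "G1 x y z t = vU * (chi x y z t * e x y z t) + br * (chi x y z t * (q x y z t * d1 x y z t))" for x y z t
  define G1x where "G1x x y z t = vU * (chix x y z t * e x y z t + chi x y z t * ex x y z t)
     + br * (chix x y z t * (q x y z t * d1 x y z t) + chi x y z t * (qx x y z t * d1 x y z t + q x y z t * d1x x y z t))" for x y z t
  define G2 where "G2 x y z t = br * (chi x y z t * (q x y z t * d2 x y z t))" for x y z t
  define G2y where "G2y x y z t = br * (chiy x y z t * (q x y z t * d2 x y z t) + chi x y z t * (qy x y z t * d2 x y z t + q x y z t * d2y x y z t))" for x y z t
  define G3 where "G3 x y z t = br * (chi x y z t * (q x y z t * d3 x y z t))" for x y z t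
  define G3z where "G3z x y z t = br * (chiz x y z t * (q x y z t * d3 x y z t) + chi x y z t * (qz x y z t * d3 x y z t + q x y z t * d3z x y z t))" for x y z t
  define Rr where "Rr x y z t = dtheta (s x y z t) * (- al * e x y z t
     - (2*br) * q x y z t * ((x - vU*t) * d1 x y z t + y * d2 x y z t + z * d3 x y z t))" for x y z t

  note P1' = P1[unfolded P4_def] and P2' = P2[unfolded P4_def] and P3' = P3[unfolded P4_def]
    and PQ' = PQ[unfolded P4_def]

  have cs: "cont4 s" unfolding s_def by (intro c4I)
  have cchi: "cont4 chi" unfolding chi_def by (intro c4I cs)
  have ce: "cont4 e" unfolding e_def by (intro c4I) (use P1' P2' P3' PQ' in auto)
  have cex: "cont4 ex" unfolding ex_def by (intro c4I) (use P1' P2' P3' PQ' in auto)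
  have cet: "cont4 et" unfolding et_def by (intro c4I) (use P1' P2' P3' PQ' in auto)
  have cchix: "cont4 chix" unfolding chix_def by (intro c4I cs)
  have cchiy: "cont4 chiy" unfolding chiy_def by (intro c4I cs)
  have cchiz: "cont4 chiz" unfolding chiz_def by (intro c4I cs)
  have cchit: "cont4 chit" unfolding chit_def by (intro c4I cs)
  note cc = ce cex cet cchi cchix cchiy cchiz cchit cs
  have cH: "cont4 H" unfolding H_def by (intro c4I cc)
  have cHt: "cont4 Ht" unfolding Ht_def by (intro c4I cc)
  have cRr: "cont4 Rr" unfolding Rr_def
    by (intro c4I cc) (use P1' P2' P3' PQ' in auto)
  have cG1x: "cont4 G1x" unfolding G1x_def
    by (intro c4I cc) (use P1' P2' P3' PQ' in auto)
  have cG2y: "cont4 G2y" unfolding G2y_def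
    by (intro c4I cc) (use P1' P2' P3' PQ' in auto)
  have cG3z: "cont4 G3z" unfolding G3z_def
    by (intro c4I cc) (use P1' P2' P3' PQ' in auto)

  have d1_dx: "\<And>x y z t. ((\<lambda>s. d1 s y z t) has_real_derivative d1x x y z t) (at x)"
   and d1_dy: "\<And>x y z t. ((\<lambda>s. d1 x s z t) has_real_derivative d1y x y z t) (at y)"
   and d1_dz: "\<And>x y z t. ((\<lambda>s. d1 x y s t) has_real_derivative d1z x y z t) (at z)"
   and d1_dt: "\<And>x y z t. ((\<lambda>s. d1 x y z s) has_real_derivative d1t x y z t) (at t)"
    using P1' by auto
  have d2_dx: "\<And>x y z t. ((\<lambda>s. d2 s y z t) has_real_derivative d2x x y z t) (at x)"
   and d2_dy: "\<And>x y z t. ((\<lambda>s. d2 x s z t) has_real_derivative d2y x y z t) (at y)"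
   and d2_dz: "\<And>x y z t. ((\<lambda>s. d2 x y s t) has_real_derivative d2z x y z t) (at z)"
   and d2_dt: "\<And>x y z t. ((\<lambda>s. d2 x y z s) has_real_derivative d2t x y z t) (at t)"
    using P2' by auto
  have d3_dx: "\<And>x y z t. ((\<lambda>s. d3 s y z t) has_real_derivative d3x x y z t) (at x)"
   and d3_dy: "\<And>x y z t. ((\<lambda>s. d3 x s z t) has_real_derivative d3y x y z t) (at y)"
   and d3_dz: "\<And>x y z t. ((\<lambda>s. d3 x y s t) has_real_derivative d3z x y z t) (at z)"
   and d3_dt: "\<And>x y z t. ((\<lambda>s. d3 x y z s) has_real_derivative d3t x y z t) (at t)"
    using P3' by auto
  have q_dx: "\<And>x y z t. ((\<lambda>s. q s y z t) has_real_derivative qx x y z t) (at x)"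
   and q_dy: "\<And>x y z t. ((\<lambda>s. q x s z t) has_real_derivative qy x y z t) (at y)"
   and q_dz: "\<And>x y z t. ((\<lambda>s. q x y s t) has_real_derivative qz x y z t) (at z)"
   and q_dt: "\<And>x y z t. ((\<lambda>s. q x y z s) has_real_derivative qt x y z t) (at t)"
    using PQ' by auto
  have chi_dx: "\<And>x y z t. ((\<lambda>w. chi w y z t) has_real_derivative chix x y z t) (at x)"
    unfolding chi_def chix_def s_def
    by (rule DERIV_chain2[OF theta_deriv]) (auto intro!: derivative_eq_intros)
  have chi_dy: "\<And>x y z t. ((\<lambda>w. chi x w z t) has_real_derivative chiy x y z t) (at y)"
    unfolding chi_def chiy_def s_def
    by (rule DERIV_chain2[OF theta_deriv]) (auto intro!: derivative_eq_intros)
  have chi_dz: "\<And>x y z t. ((\<lambda>w. chi x y w t) has_real_derivative chiz x y z t) (at z)"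
    unfolding chi_def chiz_def s_def
    by (rule DERIV_chain2[OF theta_deriv]) (auto intro!: derivative_eq_intros)
  have chi_dt: "\<And>x y z t. ((\<lambda>w. chi x y z w) has_real_derivative chit x y z t) (at t)"
    unfolding chi_def chit_def s_def
    by (rule DERIV_chain2[OF theta_deriv]) (auto intro!: derivative_eq_intros simp: algebra_simps)
  have H_dt: "\<And>x y z t. ((\<lambda>w. H x y z w) has_real_derivative Ht x y z t) (at t)"
    unfolding H_def Ht_def e_def et_def
    by (auto intro!: derivative_eq_intros chi_dt d1_dt d2_dt d3_dt q_dt simp: algebra_simps)
  have G1_dx: "\<And>x y z t. ((\<lambda>w. G1 w y z t) has_real_derivative G1x x y z t) (at x)"
    unfolding G1_def G1x_def e_def ex_def
    by (auto intro!: derivative_eq_intros chi_dx d1_dx d2_dx d3_dx q_dx simp: algebra_simps)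
  have G2_dy: "\<And>x y z t. ((\<lambda>w. G2 x w z t) has_real_derivative G2y x y z t) (at y)"
    unfolding G2_def G2y_def
    by (auto intro!: derivative_eq_intros chi_dy d2_dy q_dy simp: algebra_simps)
  have G3_dz: "\<And>x y z t. ((\<lambda>w. G3 x y w t) has_real_derivative G3z x y z t) (at z)"
    unfolding G3_def G3z_def
    by (auto intro!: derivative_eq_intros chi_dz d3_dz q_dz simp: algebra_simps)

  have ident: "Ht x y z t = Rr x y z t - G1x x y z t - G2y x y z t - G3z x y z t"
    if "t \<ge> 0" for x y z t
  proof -
    have s1: "d1t x y z t = - vU * d1x x y z t - qx x y z t / rho"
      using pde1[OF that, of x y z] rho by (simp add: field_simps)
    have s2: "d2t x y z t = - vU * d2x x y z t - qy x y z t / rho"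
      using pde2[OF that, of x y z] rho by (simp add: field_simps)
    have s3: "d3t x y z t = - vU * d3x x y z t - qz x y z t / rho"
      using pde3[OF that, of x y z] rho by (simp add: field_simps)
    have sq: "qt x y z t = - vU * qx x y z t - rho * c^2 * (d1x x y z t + d2y x y z t + d3z x y z t)"
      using pdeq[OF that, of x y z] by (simp add: field_simps)
    show ?thesis
      unfolding Ht_def Rr_def G1x_def G2y_def G3z_def et_def ex_def e_def chit_def chix_def chiy_def chiz_def
        s1 s2 s3 sq ka_def br_def a_def
      using rho c by (simp add: field_simps power2_eq_square)
  qed

  have Rr_nonpos: "Rr x y z t \<le> 0" if "t \<ge> 0" for x y z t
  proof (cases "dtheta (s x y z t) = 0")
    case True then show ?thesis by (simp add: Rr_def)
  next
    case False
    then have sp: "s x y z t > 0" by (rule dtheta_pos)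
    have "al * t \<ge> 0" using al that by simp
    then have r2: "(x - vU * t)^2 + y^2 + z^2 \<le> R^2" using sp by (simp add: s_def)
    have "- al * e x y z t - (2*br) * q x y z t * ((x - vU*t) * d1 x y z t + y * d2 x y z t + z * d3 x y z t) \<le> 0"
      using rr_aux[OF rho c R r2, of "d1 x y z t" "d2 x y z t" "d3 x y z t" "q x y z t"]
      by (simp only: al_def e_def ka_def a_def br_def)
    then show ?thesis unfolding Rr_def using mult_nonneg_nonpos[OF dtheta_nonneg] by blast
  qed

  have M0: "M \<ge> 0" using MR R by simp
  have face_x: "s x y z t \<le> 0" if "t \<ge> 0" "\<bar>x\<bar> \<ge> M" for x y z t
  proof (cases "al * t \<ge> R^2")
    case True then show ?thesis by (simp add: s_def) (smt (verit) zero_le_power2)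
  next
    case False
    then have "2*c*t < R" using R by (simp add: al_def power2_eq_square)
    then have tR: "t \<le> R / (2*c)" using c by (simp add: field_simps)
    have "\<bar>vU * t\<bar> = \<bar>vU\<bar> * t" using that by (simp add: abs_mult)
    also have "\<dots> \<le> \<bar>vU\<bar> * (R / (2*c))" by (rule mult_left_mono[OF tR abs_ge_zero])
    finally have "\<bar>vU * t\<bar> \<le> \<bar>vU\<bar> * R / (2*c)" by simp
    then have "\<bar>x - vU*t\<bar> \<ge> R" using that(2) MR unfolding M_def by linarith
    then have "(x - vU*t)^2 \<ge> R^2" using R
      by (metis abs_of_pos power2_abs power_mono less_imp_le)
    moreover have "al * t \<ge> 0" using al that by simp
    ultimately show ?thesis by (simp add: s_def) (smt (verit) zero_le_power2)
  qed
  have face_y: "s x y z t \<le> 0" if "t \<ge> 0" "\<bar>y\<bar> \<ge> M" for x y z t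
  proof -
    have "\<bar>y\<bar> \<ge> R" using that MR by linarith
    then have "y^2 \<ge> R^2" using R by (metis abs_of_pos power2_abs power_mono less_imp_le)
    moreover have "al * t \<ge> 0" using al that by simp
    ultimately show ?thesis by (simp add: s_def) (smt (verit) zero_le_power2)
  qed
  have face_z: "s x y z t \<le> 0" if "t \<ge> 0" "\<bar>z\<bar> \<ge> M" for x y z t
  proof -
    have "\<bar>z\<bar> \<ge> R" using that MR by linarith
    then have "z^2 \<ge> R^2" using R by (metis abs_of_pos power2_abs power_mono less_imp_le)
    moreover have "al * t \<ge> 0" using al that by simp
    ultimately show ?thesis by (simp add: s_def) (smt (verit) zero_le_power2)
  qed

  define B where "B = cbox (-M,-M,-M) (M,M,M)"
  have intG1: "integral B (\<lambda>p. G1x (fst p) (fst (snd p)) (snd (snd p)) t) = 0" if "t \<ge> 0" for t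
    unfolding B_def
    by (rule int_dx_zero[where G="\<lambda>x y z. G1 x y z t" and g="\<lambda>x y z. G1x x y z t"])
       (use G1_dx cont4_fix_t[OF cG1x] M0 face_x[OF that] in \<open>auto simp: G1_def chi_def theta_zero\<close>)
  have intG2: "integral B (\<lambda>p. G2y (fst p) (fst (snd p)) (snd (snd p)) t) = 0" if "t \<ge> 0" for t
    unfolding B_def
    by (rule int_dy_zero[where G="\<lambda>x y z. G2 x y z t" and g="\<lambda>x y z. G2y x y z t"])
       (use G2_dy cont4_fix_t[OF cG2y] M0 face_y[OF that] in \<open>auto simp: G2_def chi_def theta_zero\<close>)
  have intG3: "integral B (\<lambda>p. G3z (fst p) (fst (snd p)) (snd (snd p)) t) = 0" if "t \<ge> 0" for t
    unfolding B_def
    by (rule int_dz_zero[where G="\<lambda>x y z. G3 x y z t" and g="\<lambda>x y z. G3z x y z t"])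
       (use G3_dz cont4_fix_t[OF cG3z] M0 face_z[OF that] in \<open>auto simp: G3_def chi_def theta_zero\<close>)

  define E where "E t = integral B (\<lambda>p. H (fst p) (fst (snd p)) (snd (snd p)) t)" for t
  have Ederiv: "(E has_real_derivative integral B (\<lambda>p. Ht (fst p) (fst (snd p)) (snd (snd p)) t)) (at t)" for t
    unfolding E_def B_def
    by (rule leibniz_rule_field_derivative[where U=UNIV])
       (auto intro: H_dt cont4_integrable[OF cH] cont4_tp[OF cHt])
  have Ht_int: "integral B (\<lambda>p. Ht (fst p) (fst (snd p)) (snd (snd p)) t) \<le> 0" if "t \<ge> 0" for t
  proof -
    have "integral B (\<lambda>p. Ht (fst p) (fst (snd p)) (snd (snd p)) t)
        = integral B (\<lambda>p. Rr (fst p) (fst (snd p)) (snd (snd p)) t - G1x (fst p) (fst (snd p)) (snd (snd p)) t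
             - G2y (fst p) (fst (snd p)) (snd (snd p)) t - G3z (fst p) (fst (snd p)) (snd (snd p)) t)"
      by (rule integral_cong) (simp add: ident[OF that])
    also have "\<dots> = integral B (\<lambda>p. Rr (fst p) (fst (snd p)) (snd (snd p)) t)
        - integral B (\<lambda>p. G1x (fst p) (fst (snd p)) (snd (snd p)) t)
        - integral B (\<lambda>p. G2y (fst p) (fst (snd p)) (snd (snd p)) t)
        - integral B (\<lambda>p. G3z (fst p) (fst (snd p)) (snd (snd p)) t)"
      unfolding B_def
      by (simp add: integral_diff integrable_diff cont4_integrable cRr cG1x cG2y cG3z)
    also have "\<dots> = integral B (\<lambda>p. Rr (fst p) (fst (snd p)) (snd (snd p)) t)"
      using intG1[OF that] intG2[OF that] intG3[OF that] by simp
    also have "\<dots> \<le> integral B (\<lambda>p. 0)"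
      unfolding B_def
      by (rule integral_le) (auto intro: cont4_integrable[OF cRr] Rr_nonpos[OF that])
    finally show ?thesis by simp
  qed
  have E0: "E 0 = 0" unfolding E_def H_def e_def using init by simp
  have "E t0 \<le> E 0"
    by (rule DERIV_nonpos_imp_nonincreasing[OF t0]) (use Ederiv Ht_int in auto)
  with E0 have Et0: "E t0 \<le> 0" by simp
  have Hnn: "H x y z t \<ge> 0" for x y z t
    unfolding H_def e_def chi_def using theta_nonneg ka by (intro mult_nonneg_nonneg) auto
  have "E t0 \<ge> 0" unfolding E_def B_def
    by (rule integral_nonneg) (auto intro: cont4_integrable[OF cH] Hnn)
  with Et0 have "E t0 = 0" by simp
  then have Hz: "\<forall>p\<in>B. H (fst p) (fst (snd p)) (snd (snd p)) t0 = 0"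
    unfolding E_def B_def
    by (subst (asm) integral_cbox_eq_0_iff) (use cont4_fix_t[OF cH] box3_ne MR R Hnn in auto)

  define X0 where "X0 = x0 - vU * t0"
  define A where "A = \<bar>X0\<bar> + \<bar>y0\<bar> + \<bar>z0\<bar>"
  have A0: "A \<ge> 0" by (simp add: A_def)
  have RA: "R - 2*c*t0 = A + 1" by (simp add: R_def A_def X0_def)
  have ct0: "2*c*t0 \<ge> 0" using c t0 by simp
  have "A^2 = X0^2 + y0^2 + z0^2 + 2*(\<bar>X0\<bar>*\<bar>y0\<bar> + \<bar>X0\<bar>*\<bar>z0\<bar> + \<bar>y0\<bar>*\<bar>z0\<bar>)"
    by (simp add: A_def power2_eq_square algebra_simps abs_mult_self_eq)
  then have sqA: "X0^2 + y0^2 + z0^2 \<le> A^2" by (simp add: add_nonneg_nonneg)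
  have "R^2 - al*t0 = R * (R - 2*c*t0)" by (simp add: al_def power2_eq_square algebra_simps)
  also have "\<dots> = R * (A + 1)" by (simp add: RA)
  also have "\<dots> \<ge> (A+1) * (A+1)" using RA ct0 A0 by (intro mult_right_mono) auto
  finally have "R^2 - al*t0 \<ge> (A+1)*(A+1)" .
  moreover have "(A+1)*(A+1) > A^2" using A0 by (simp add: power2_eq_square algebra_simps)
  ultimately have spos: "s x0 y0 z0 t0 > 0" using sqA by (simp add: s_def X0_def[symmetric])
  have "\<bar>X0\<bar> \<le> R" "\<bar>y0\<bar> \<le> R" "\<bar>z0\<bar> \<le> R" using RA ct0 by (auto simp: A_def)
  have "t0 \<le> R / (2*c)" using RA ct0 A0 c by (simp add: field_simps)
  then have "\<bar>vU\<bar> * t0 \<le> \<bar>vU\<bar> * (R / (2*c))" by (rule mult_left_mono) simp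
  moreover have "\<bar>vU*t0\<bar> = \<bar>vU\<bar>*t0" using t0 by (simp add: abs_mult)
  moreover have "\<bar>x0\<bar> \<le> \<bar>x0 - vU*t0\<bar> + \<bar>vU*t0\<bar>" by (rule order_trans[OF _ abs_triangle_ineq]) simp
  ultimately have "\<bar>x0\<bar> \<le> M" using \<open>\<bar>X0\<bar> \<le> R\<close> unfolding M_def X0_def
    by simp
  then have "(x0,y0,z0) \<in> B" unfolding B_def using MR \<open>\<bar>y0\<bar> \<le> R\<close> \<open>\<bar>z0\<bar> \<le> R\<close>
    by (intro cbox3_mem) auto
  with Hz have "H x0 y0 z0 t0 = 0" by auto
  moreover have "chi x0 y0 z0 t0 > 0" unfolding chi_def using spos by (rule theta_pos)
  ultimately have "e x0 y0 z0 t0 = 0" by (simp add: H_def)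
  then have "(d1 x0 y0 z0 t0)^2 + (d2 x0 y0 z0 t0)^2 + (d3 x0 y0 z0 t0)^2 + ka * (q x0 y0 z0 t0)^2 = 0"
    by (simp add: e_def)
  moreover have "ka * (q x0 y0 z0 t0)^2 \<ge> 0" using ka by simp
  ultimately have "(d1 x0 y0 z0 t0)^2 = 0" "(d2 x0 y0 z0 t0)^2 = 0" "(d3 x0 y0 z0 t0)^2 = 0"
    "ka * (q x0 y0 z0 t0)^2 = 0"
    using zero_le_power2[of "d1 x0 y0 z0 t0"] zero_le_power2[of "d2 x0 y0 z0 t0"]
      zero_le_power2[of "d3 x0 y0 z0 t0"] by linarith+
  then show ?thesis using ka by simp
qed

lemma per_seq:
  fixes g :: "real \<Rightarrow> real"
  assumes lim: "(g \<longlongrightarrow> 0) at_top" and P: "P > 0" and eq: "\<And>n::nat. g (t0 + real n * P) = K"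
  shows "K = 0"
proof -
  have fl: "filterlim (\<lambda>n::nat. t0 + real n * P) at_top sequentially"
  proof (subst filterlim_at_top, intro allI)
    fix Z :: real
    obtain N :: nat where N: "real N \<ge> (Z - t0) / P" using real_arch_simple by blast
    show "\<forall>\<^sub>F n in sequentially. Z \<le> t0 + real n * P"
    proof (rule eventually_sequentiallyI[of N])
      fix n assume "N \<le> n"
      then have "real n \<ge> (Z - t0) / P" using N by linarith
      then have "real n * P \<ge> Z - t0" using P by (simp add: field_simps)
      then show "Z \<le> t0 + real n * P" by simp
    qed
  qed
  have "((\<lambda>n. g (t0 + real n * P)) \<longlongrightarrow> 0) sequentially"
    by (rule filterlim_compose[OF lim fl])
  then have "((\<lambda>n::nat. K) \<longlongrightarrow> 0) sequentially" using eq by simp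
  then show ?thesis by (simp add: LIMSEQ_const_iff)
qed

lemma sin_shift: "sin (th + s * (2 * real n * pi)) = sin th" if "s = 1 \<or> s = -1"
  using that by (auto simp: sin_add sin_diff)
lemma cos_shift: "cos (th + s * (2 * real n * pi)) = cos th" if "s = 1 \<or> s = -1"
  using that by (auto simp: cos_add cos_diff)

lemma trig_lim:
  fixes om phi A Bc K :: real
  assumes om: "om \<noteq> 0"
    and lim: "((\<lambda>t. sin (om * t + phi) * A + cos (om * t + phi) * Bc + K) \<longlongrightarrow> 0) at_top"
  shows "A = 0 \<and> Bc = 0 \<and> K = 0"
proof -
  define P where "P = 2 * pi / \<bar>om\<bar>"
  have P: "P > 0" using om by (simp add: P_def)
  define sg where "sg = (if om > 0 then 1 else -1::real)"
  have sg: "sg = 1 \<or> sg = -1" by (simp add: sg_def)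
  have phase: "om * ((th - phi) / om + real n * P) + phi = th + sg * (2 * real n * pi)" for th n
    using om by (auto simp: P_def sg_def field_simps)
  have val: "sin (om * ((th - phi) / om + real n * P) + phi) * A + cos (om * ((th - phi) / om + real n * P) + phi) * Bc + K
      = sin th * A + cos th * Bc + K" for th n
    unfolding phase sin_shift[OF sg] cos_shift[OF sg] ..
  have e1: "sin (pi/2) * A + cos (pi/2) * Bc + K = 0"
    by (rule per_seq[OF lim P]) (rule val)
  have e2: "sin 0 * A + cos 0 * Bc + K = 0"
    by (rule per_seq[OF lim P]) (rule val)
  have e3: "sin pi * A + cos pi * Bc + K = 0"
    by (rule per_seq[OF lim P]) (rule val)
  from e1 e2 e3 show ?thesis by simp
qed

definition sol1d where
  "sol1d f sig om u ux ut \<longleftrightarrow>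
    (\<forall>x t. ((\<lambda>s. u s t) has_real_derivative ux x t) (at x) \<and> ((\<lambda>s. u x s) has_real_derivative ut x t) (at t))
    \<and> continuous_on UNIV (\<lambda>p. u (fst p) (snd p)) \<and> continuous_on UNIV (\<lambda>p. ux (fst p) (snd p))
    \<and> continuous_on UNIV (\<lambda>p. ut (fst p) (snd p))
    \<and> (\<forall>x t. ut x t + sig * ux x t = f x * sin (om * t))
    \<and> (\<forall>x. u x 0 = 0)
    \<and> (\<forall>B. (\<forall>x. \<bar>f x\<bar> \<le> B) \<longrightarrow> (\<forall>x t. t \<ge> 0 \<longrightarrow> \<bar>u x t\<bar> \<le> B * (2 / \<bar>om\<bar> + 2 * t)))
    \<and> (om \<noteq> 0 \<longrightarrow> (\<forall>x. ((\<lambda>t. u x t) \<longlongrightarrow> 0) at_top) \<longrightarrow> (\<forall>x. f x = 0))"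

lemma cont_compU: "continuous_on UNIV h \<Longrightarrow> continuous_on S g \<Longrightarrow> continuous_on S (\<lambda>x. h (g x))"
  by (rule continuous_on_compose2[where t=UNIV]) auto

lemma one_d_zero:
  fixes f f' :: "real \<Rightarrow> real"
  assumes fd: "\<And>x. (f has_real_derivative f' x) (at x)" and cf': "continuous_on UNIV f'"
  shows "\<exists>u ux ut. sol1d f 0 om u ux ut"
proof -
  have cf: "continuous_on UNIV f"
    using fd by (intro continuous_at_imp_continuous_on) (auto intro: DERIV_isCont)
  define u where "u x t = f x * ((1 - cos (om * t)) / om)" for x t
  define ux where "ux x t = f' x * ((1 - cos (om * t)) / om)" for x t
  define ut where "ut x t = f x * sin (om * t)" for x t
  have d1: "((\<lambda>s. u s t) has_real_derivative ux x t) (at x)" for x t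
    unfolding u_def ux_def by (rule DERIV_cmult_right[OF fd])
  have d2: "((\<lambda>s. u x s) has_real_derivative ut x t) (at t)" for x t
  proof (cases "om = 0")
    case True then show ?thesis by (simp add: u_def ut_def)
  next
    case False then show ?thesis
      unfolding u_def ut_def by (auto intro!: derivative_eq_intros simp: field_simps)
  qed
  have c1: "continuous_on UNIV (\<lambda>p. u (fst p) (snd p))" unfolding u_def divide_inverse
    by (intro continuous_intros cont_compU[OF cf])
  have c2: "continuous_on UNIV (\<lambda>p. ux (fst p) (snd p))" unfolding ux_def divide_inverse
    by (intro continuous_intros cont_compU[OF cf'])
  have c3: "continuous_on UNIV (\<lambda>p. ut (fst p) (snd p))" unfolding ut_def
    by (intro continuous_intros cont_compU[OF cf])
  have bd: "\<bar>u x t\<bar> \<le> B * (2 / \<bar>om\<bar> + 2 * t)" if B: "\<forall>x. \<bar>f x\<bar> \<le> B" and t: "t \<ge> 0" for B x t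
  proof -
    have B0: "B \<ge> 0" using B by (meson abs_ge_zero order_trans)
    have "\<bar>1 - cos (om * t)\<bar> \<le> 2" using cos_ge_minus_one[of "om*t"] cos_le_one[of "om*t"] by linarith
    then have "\<bar>u x t\<bar> \<le> B * 2 / \<bar>om\<bar>"
      unfolding u_def using B by (simp add: abs_mult divide_right_mono mult_mono')
    also have "\<dots> \<le> B * (2 / \<bar>om\<bar> + 2 * t)" using B0 t by (simp add: distrib_left mult_nonneg_nonneg)
    finally show ?thesis .
  qed
  have lim: "f x = 0" if om: "om \<noteq> 0" and l: "\<forall>x. ((\<lambda>t. u x t) \<longlongrightarrow> 0) at_top" for x
  proof -
    have "((\<lambda>t. sin (om * t + 0) * 0 + cos (om * t + 0) * (- f x / om) + f x / om) \<longlongrightarrow> 0) at_top"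
    proof -
      have "(\<lambda>t. sin (om * t + 0) * 0 + cos (om * t + 0) * (- f x / om) + f x / om) = u x"
        using om by (intro ext) (simp add: u_def field_simps)
      then show ?thesis using l by simp
    qed
    from trig_lim[OF om this] show ?thesis using om by simp
  qed
  have u0: "u x 0 = 0" for x by (simp add: u_def)
  have pde: "ut x t + 0 * ux x t = f x * sin (om * t)" for x t by (simp add: ut_def)
  show ?thesis unfolding sol1d_def
    by (rule exI[of _ u], rule exI[of _ ux], rule exI[of _ ut])
       (use d1 d2 c1 c2 c3 bd lim u0 pde in \<open>blast\<close>)
qed

lemma global_antideriv:
  fixes g :: "real \<Rightarrow> real"
  assumes "continuous_on UNIV g"
  obtains G where "\<And>x. (G has_real_derivative g x) (at x)"
proof -
  have "\<exists>G. \<forall>x::real. -\<infinity> < ereal x \<longrightarrow> ereal x < \<infinity> \<longrightarrow> (G has_vector_derivative g x) (at x)"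
    by (rule einterval_antiderivative) (use assms in \<open>auto simp: continuous_on_eq_continuous_at\<close>)
  then obtain G where "\<And>x. (G has_vector_derivative g x) (at x)" by auto
  then have "\<And>x. (G has_real_derivative g x) (at x)" by (simp add: has_real_derivative_iff_has_vector_derivative)
  then show ?thesis by (rule that)
qed

lemma one_d_nz:
  fixes f f' :: "real \<Rightarrow> real"
  assumes fd: "\<And>x. (f has_real_derivative f' x) (at x)" and sig: "sig \<noteq> 0"
  shows "\<exists>u ux ut. sol1d f sig om u ux ut"
proof -
  have cf: "continuous_on UNIV f"
    using fd by (intro continuous_at_imp_continuous_on) (auto intro: DERIV_isCont)
  define cc where "cc x = f x * cos (om * x / sig) / sig" for x
  define ss where "ss x = f x * sin (om * x / sig) / sig" for x
  have ccc: "continuous_on UNIV cc" unfolding cc_def divide_inverse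
    by (intro continuous_intros cont_compU[OF cf])
  have css: "continuous_on UNIV ss" unfolding ss_def divide_inverse
    by (intro continuous_intros cont_compU[OF cf])
  obtain C where Cd: "\<And>x. (C has_real_derivative cc x) (at x)" using global_antideriv[OF ccc] by blast
  obtain S where Sd: "\<And>x. (S has_real_derivative ss x) (at x)" using global_antideriv[OF css] by blast
  have cC: "continuous_on UNIV C"
    using Cd by (intro continuous_at_imp_continuous_on) (auto intro: DERIV_isCont)
  have cS: "continuous_on UNIV S"
    using Sd by (intro continuous_at_imp_continuous_on) (auto intro: DERIV_isCont)
  have Cc: "((\<lambda>x. C (g x)) has_real_derivative cc (g x) * g') (at x)"
    if "(g has_real_derivative g') (at x)" for g g' x
    by (rule DERIV_chain2[OF Cd that])
  have Sc: "((\<lambda>x. S (g x)) has_real_derivative ss (g x) * g') (at x)"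
    if "(g has_real_derivative g') (at x)" for g g' x
    by (rule DERIV_chain2[OF Sd that])
  define th where "th x t = om * (t - x / sig)" for x t
  define u where "u x t = sin (th x t) * (C x - C (x - sig * t)) + cos (th x t) * (S x - S (x - sig * t))" for x t
  define ux where "ux x t = cos (th x t) * (- om / sig) * (C x - C (x - sig * t))
      + sin (th x t) * (cc x - cc (x - sig * t))
      - sin (th x t) * (- om / sig) * (S x - S (x - sig * t))
      + cos (th x t) * (ss x - ss (x - sig * t))" for x t
  define ut where "ut x t = cos (th x t) * om * (C x - C (x - sig * t))
      + sin (th x t) * (sig * cc (x - sig * t))
      - sin (th x t) * om * (S x - S (x - sig * t))
      + cos (th x t) * (sig * ss (x - sig * t))" for x t
  have d1: "((\<lambda>s. u s t) has_real_derivative ux x t) (at x)" for x t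
    unfolding u_def ux_def th_def using sig
    by (auto intro!: derivative_eq_intros Cc Sc Cd Sd simp: field_simps)
  have d2: "((\<lambda>s. u x s) has_real_derivative ut x t) (at t)" for x t
    unfolding u_def ut_def th_def using sig
    by (auto intro!: derivative_eq_intros Cc Sc Cd Sd simp: field_simps)
  have c1: "continuous_on UNIV (\<lambda>p. u (fst p) (snd p))" unfolding u_def th_def divide_inverse
    by (intro continuous_intros cont_compU[OF cC] cont_compU[OF cS])
  have c2: "continuous_on UNIV (\<lambda>p. ux (fst p) (snd p))" unfolding ux_def th_def divide_inverse
    by (intro continuous_intros cont_compU[OF cC] cont_compU[OF cS] cont_compU[OF ccc] cont_compU[OF css])
  have c3: "continuous_on UNIV (\<lambda>p. ut (fst p) (snd p))" unfolding ut_def th_def divide_inverse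
    by (intro continuous_intros cont_compU[OF cC] cont_compU[OF cS] cont_compU[OF ccc] cont_compU[OF css])
  have pde: "ut x t + sig * ux x t = f x * sin (om * t)" for x t
  proof -
    have "ut x t + sig * ux x t = sig * (sin (th x t) * cc x + cos (th x t) * ss x)"
      unfolding ut_def ux_def using sig by (simp add: field_simps)
    also have "\<dots> = f x * (sin (th x t) * cos (om * x / sig) + cos (th x t) * sin (om * x / sig))"
      unfolding cc_def ss_def using sig by (simp add: field_simps)
    also have "\<dots> = f x * sin (th x t + om * x / sig)" by (simp add: sin_add)
    also have "th x t + om * x / sig = om * t" unfolding th_def using sig by (simp add: field_simps)
    finally show ?thesis .
  qed
  have u0: "u x 0 = 0" for x by (simp add: u_def)
  have bd: "\<bar>u x t\<bar> \<le> B * (2 / \<bar>om\<bar> + 2 * t)" if B: "\<forall>x. \<bar>f x\<bar> \<le> B" and t: "t \<ge> 0" for B x t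
  proof -
    have B0: "B \<ge> 0" using B by (meson abs_ge_zero order_trans)
    have ccb: "norm (cc y) \<le> B / \<bar>sig\<bar>" for y
    proof -
      have "\<bar>f y\<bar> * \<bar>cos (om * y / sig)\<bar> \<le> B * 1"
        by (rule mult_mono) (use B abs_cos_le_one in auto)
      then show ?thesis unfolding cc_def by (simp add: abs_mult divide_right_mono)
    qed
    have ssb: "norm (ss y) \<le> B / \<bar>sig\<bar>" for y
    proof -
      have "\<bar>f y\<bar> * \<bar>sin (om * y / sig)\<bar> \<le> B * 1"
        by (rule mult_mono) (use B abs_sin_le_one in auto)
      then show ?thesis unfolding ss_def by (simp add: abs_mult divide_right_mono)
    qed
    have "norm (C x - C (x - sig * t)) \<le> B / \<bar>sig\<bar> * norm (x - (x - sig * t))"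
      by (rule field_differentiable_bound[where S=UNIV]) (use Cd ccb in auto)
    also have "\<dots> = B * t" using sig t by (simp add: abs_mult)
    finally have hC: "\<bar>C x - C (x - sig * t)\<bar> \<le> B * t" by simp
    have "norm (S x - S (x - sig * t)) \<le> B / \<bar>sig\<bar> * norm (x - (x - sig * t))"
      by (rule field_differentiable_bound[where S=UNIV]) (use Sd ssb in auto)
    also have "\<dots> = B * t" using sig t by (simp add: abs_mult)
    finally have hS: "\<bar>S x - S (x - sig * t)\<bar> \<le> B * t" by simp
    have "\<bar>u x t\<bar> \<le> \<bar>sin (th x t)\<bar> * \<bar>C x - C (x - sig * t)\<bar> + \<bar>cos (th x t)\<bar> * \<bar>S x - S (x - sig * t)\<bar>"
      unfolding u_def by (metis abs_mult abs_triangle_ineq)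
    also have "\<dots> \<le> 1 * (B * t) + 1 * (B * t)"
      by (intro add_mono mult_mono hC hS abs_sin_le_one abs_cos_le_one) auto
    also have "\<dots> \<le> B * (2 / \<bar>om\<bar> + 2 * t)" using B0 t by (simp add: distrib_left)
    finally show ?thesis .
  qed
  have lim: "f x = 0" if om: "om \<noteq> 0" and l: "\<forall>x. ((\<lambda>t. u x t) \<longlongrightarrow> 0) at_top" for x
  proof -
    have const: "C y = C x \<and> S y = S x" for y
    proof -
      have l1: "((\<lambda>t. u y (t + (y - x) / sig)) \<longlongrightarrow> 0) at_top"
        by (rule filterlim_compose[OF l[rule_format, of y]])
           (use filterlim_tendsto_add_at_top[OF tendsto_const[of "(y - x) / sig" at_top] filterlim_ident] in \<open>simp add: add.commute\<close>)
      have l2: "((\<lambda>t. u y (t + (y - x) / sig) - u x t) \<longlongrightarrow> 0) at_top"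
        using tendsto_diff[OF l1 l[rule_format, of x]] by simp
      have eq: "u y (t + (y - x) / sig) - u x t
          = sin (om * t + (- om * x / sig)) * (C y - C x) + cos (om * t + (- om * x / sig)) * (S y - S x) + 0" for t
      proof -
        have a1: "th y (t + (y - x) / sig) = om * t + (- om * x / sig)" unfolding th_def using sig
          by (simp add: field_simps)
        have a2: "th x t = om * t + (- om * x / sig)" unfolding th_def using sig
          by (simp add: field_simps)
        have a3: "y - sig * (t + (y - x) / sig) = x - sig * t" using sig by (simp add: field_simps)
        show ?thesis unfolding u_def a1 a2 a3 by (simp add: algebra_simps)
      qed
      from l2 have "((\<lambda>t. sin (om * t + (- om * x / sig)) * (C y - C x) + cos (om * t + (- om * x / sig)) * (S y - S x) + 0) \<longlongrightarrow> 0) at_top"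
        by (simp only: eq)
      from trig_lim[OF om this] show ?thesis by simp
    qed
    have "C = (\<lambda>_. C x)" using const by auto
    then have "((\<lambda>_. C x) has_real_derivative cc x) (at x)" using Cd[of x] by simp
    then have c0: "cc x = 0" using DERIV_const DERIV_unique by blast
    have "S = (\<lambda>_. S x)" using const by auto
    then have "((\<lambda>_. S x) has_real_derivative ss x) (at x)" using Sd[of x] by simp
    then have s0: "ss x = 0" using DERIV_const DERIV_unique by blast
    have h1: "f x * cos (om * x / sig) = 0" and h2: "f x * sin (om * x / sig) = 0"
      using c0 s0 sig by (auto simp: cc_def ss_def)
    have "f x * (cos (om * x / sig))^2 + f x * (sin (om * x / sig))^2
        = (f x * cos (om * x / sig)) * cos (om * x / sig) + (f x * sin (om * x / sig)) * sin (om * x / sig)"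
      by (simp add: power2_eq_square)
    then have "f x * (cos (om * x / sig))^2 + f x * (sin (om * x / sig))^2 = 0"
      by (simp only: h1 h2)
    then show ?thesis by (simp add: distrib_left[symmetric])
  qed
  show ?thesis unfolding sol1d_def
    by (rule exI[of _ u], rule exI[of _ ux], rule exI[of _ ut])
       (use d1 d2 c1 c2 c3 bd lim u0 pde in \<open>blast\<close>)
qed

lemma one_d:
  fixes f f' :: "real \<Rightarrow> real"
  assumes fd: "\<And>x. (f has_real_derivative f' x) (at x)" and cf': "continuous_on UNIV f'"
  shows "\<exists>u ux ut. sol1d f sig om u ux ut"
  using one_d_zero[OF fd cf', of om] one_d_nz[OF fd, of sig om] by (cases "sig = 0") auto

lemma mode_P4:
  assumes "sol1d f sig om u ux ut"
  shows "P4 (\<lambda>x y z t. u (k*x + l*y + m*z) t)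
            (\<lambda>x y z t. ux (k*x + l*y + m*z) t * k) (\<lambda>x y z t. ux (k*x + l*y + m*z) t * l)
            (\<lambda>x y z t. ux (k*x + l*y + m*z) t * m) (\<lambda>x y z t. ut (k*x + l*y + m*z) t)"
proof -
  note S = assms[unfolded sol1d_def]
  have du: "\<And>x t. ((\<lambda>s. u s t) has_real_derivative ux x t) (at x)"
   and dt: "\<And>x t. ((\<lambda>s. u x s) has_real_derivative ut x t) (at t)"
   and cu: "continuous_on UNIV (\<lambda>p. u (fst p) (snd p))"
   and cux: "continuous_on UNIV (\<lambda>p. ux (fst p) (snd p))"
   and cut: "continuous_on UNIV (\<lambda>p. ut (fst p) (snd p))" using S by auto
  have c4: "cont4 (\<lambda>x y z t. g (k*x + l*y + m*z) t)" if cg: "continuous_on UNIV (\<lambda>p. g (fst p) (snd p))" for g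
  proof -
    have "continuous_on UNIV ((\<lambda>p. g (fst p) (snd p)) \<circ>
          (\<lambda>(v::real\<times>real\<times>real\<times>real). (k * fst v + l * fst (snd v) + m * fst (snd (snd v)), snd (snd (snd v)))))"
      by (rule continuous_on_compose, intro continuous_intros, rule continuous_on_subset[OF cg]) auto
    then show ?thesis unfolding cont4_def by (simp add: o_def)
  qed
  show ?thesis unfolding P4_def
  proof (intro conjI allI)
    fix x y z t
    show "((\<lambda>s. u (k * s + l*y + m*z) t) has_real_derivative ux (k*x + l*y + m*z) t * k) (at x)"
      by (rule DERIV_chain2[OF du]) (auto intro!: derivative_eq_intros)
    show "((\<lambda>s. u (k*x + l * s + m*z) t) has_real_derivative ux (k*x + l*y + m*z) t * l) (at y)"
      by (rule DERIV_chain2[OF du]) (auto intro!: derivative_eq_intros)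
    show "((\<lambda>s. u (k*x + l*y + m * s) t) has_real_derivative ux (k*x + l*y + m*z) t * m) (at z)"
      by (rule DERIV_chain2[OF du]) (auto intro!: derivative_eq_intros)
    show "((\<lambda>s. u (k*x + l*y + m*z) s) has_real_derivative ut (k*x + l*y + m*z) t) (at t)"
      by (rule dt)
  next
    show "cont4 (\<lambda>x y z t. u (k*x + l*y + m*z) t)" by (rule c4[OF cu])
    show "cont4 (\<lambda>x y z t. ux (k*x + l*y + m*z) t * k)" by (intro cont4_mult c4[OF cux] cont4_const)
    show "cont4 (\<lambda>x y z t. ux (k*x + l*y + m*z) t * l)" by (intro cont4_mult c4[OF cux] cont4_const)
    show "cont4 (\<lambda>x y z t. ux (k*x + l*y + m*z) t * m)" by (intro cont4_mult c4[OF cux] cont4_const)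
    show "cont4 (\<lambda>x y z t. ut (k*x + l*y + m*z) t)" by (rule c4[OF cut])
  qed
qed

lemma P4_lin4:
  assumes "P4 f1 f1x f1y f1z f1t" "P4 f2 f2x f2y f2z f2t" "P4 f3 f3x f3y f3z f3t" "P4 f4 f4x f4y f4z f4t"
  shows "P4 (\<lambda>x y z t. a1 * f1 x y z t + a2 * f2 x y z t + a3 * f3 x y z t + a4 * f4 x y z t)
     (\<lambda>x y z t. a1 * f1x x y z t + a2 * f2x x y z t + a3 * f3x x y z t + a4 * f4x x y z t)
     (\<lambda>x y z t. a1 * f1y x y z t + a2 * f2y x y z t + a3 * f3y x y z t + a4 * f4y x y z t)
     (\<lambda>x y z t. a1 * f1z x y z t + a2 * f2z x y z t + a3 * f3z x y z t + a4 * f4z x y z t)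
     (\<lambda>x y z t. a1 * f1t x y z t + a2 * f2t x y z t + a3 * f3t x y z t + a4 * f4t x y z t)"
proof -
  have h12: "P4 (\<lambda>x y z t. a1 * f1 x y z t + a2 * f2 x y z t)
     (\<lambda>x y z t. a1 * f1x x y z t + a2 * f2x x y z t) (\<lambda>x y z t. a1 * f1y x y z t + a2 * f2y x y z t)
     (\<lambda>x y z t. a1 * f1z x y z t + a2 * f2z x y z t) (\<lambda>x y z t. a1 * f1t x y z t + a2 * f2t x y z t)"
    by (rule P4_lin[OF assms(1,2)])
  have h34: "P4 (\<lambda>x y z t. a3 * f3 x y z t + a4 * f4 x y z t)
     (\<lambda>x y z t. a3 * f3x x y z t + a4 * f4x x y z t) (\<lambda>x y z t. a3 * f3y x y z t + a4 * f4y x y z t)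
     (\<lambda>x y z t. a3 * f3z x y z t + a4 * f4z x y z t) (\<lambda>x y z t. a3 * f3t x y z t + a4 * f4t x y z t)"
    by (rule P4_lin[OF assms(3,4)])
  show ?thesis using P4_lin[OF h12 h34, where a=1 and b=1] by (simp add: add.assoc)
qed

lemma pde_alg:
  fixes U0 c rho k1 k2 k3 k4 l1 l2 l3 l4 m1 m2 m3 m4 r1 r2 g1 g2 g3 g4 v1 v2 v3 v4 sn :: real
  assumes k3: "k3 \<noteq> 0" and k4: "k4 \<noteq> 0" and rho: "rho \<noteq> 0"
    and r1: "r1^2 = k1^2 + l1^2 + m1^2" and r2: "r2^2 = k2^2 + l2^2 + m2^2"
    and t1: "t1 = g1 * sn - (U0 * k1 - c * r1) * v1"
    and t2: "t2 = g2 * sn - (U0 * k2 + c * r2) * v2"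
    and t3: "t3 = g3 * sn - (U0 * k3) * v3"
    and t4: "t4 = g4 * sn - (U0 * k4) * v4"
  shows "(k1 * t1 + k2 * t2 + l3 / k3 * t3 + m4 / k4 * t4)
          + U0 * (k1 * (v1 * k1) + k2 * (v2 * k2) + l3 / k3 * (v3 * k3) + m4 / k4 * (v4 * k4))
          + 1 / rho * (- c * rho * r1 * (v1 * k1) + c * rho * r2 * (v2 * k2) + 0 * (v3 * k3) + 0 * (v4 * k4))
          = (k1 * g1 + k2 * g2 + l3 / k3 * g3 + m4 / k4 * g4) * sn"
    and "(l1 * t1 + l2 * t2 + (-1) * t3 + 0 * t4)
          + U0 * (l1 * (v1 * k1) + l2 * (v2 * k2) + (-1) * (v3 * k3) + 0 * (v4 * k4))
          + 1 / rho * (- c * rho * r1 * (v1 * l1) + c * rho * r2 * (v2 * l2) + 0 * (v3 * l3) + 0 * (v4 * l4))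
          = (l1 * g1 + l2 * g2 + (-1) * g3 + 0 * g4) * sn"
    and "(m1 * t1 + m2 * t2 + 0 * t3 + (-1) * t4)
          + U0 * (m1 * (v1 * k1) + m2 * (v2 * k2) + 0 * (v3 * k3) + (-1) * (v4 * k4))
          + 1 / rho * (- c * rho * r1 * (v1 * m1) + c * rho * r2 * (v2 * m2) + 0 * (v3 * m3) + 0 * (v4 * m4))
          = (m1 * g1 + m2 * g2 + 0 * g3 + (-1) * g4) * sn"
    and "(- c * rho * r1 * t1 + c * rho * r2 * t2 + 0 * t3 + 0 * t4)
          + U0 * (- c * rho * r1 * (v1 * k1) + c * rho * r2 * (v2 * k2) + 0 * (v3 * k3) + 0 * (v4 * k4))
          + rho * c^2 * ((k1 * (v1 * k1) + k2 * (v2 * k2) + l3 / k3 * (v3 * k3) + m4 / k4 * (v4 * k4))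
               + (l1 * (v1 * l1) + l2 * (v2 * l2) + (-1) * (v3 * l3) + 0 * (v4 * l4))
               + (m1 * (v1 * m1) + m2 * (v2 * m2) + 0 * (v3 * m3) + (-1) * (v4 * m4)))
          = (- c * rho * r1 * g1 + c * rho * r2 * g2 + 0 * g3 + 0 * g4) * sn"
proof -
  show "(k1 * t1 + k2 * t2 + l3 / k3 * t3 + m4 / k4 * t4)
          + U0 * (k1 * (v1 * k1) + k2 * (v2 * k2) + l3 / k3 * (v3 * k3) + m4 / k4 * (v4 * k4))
          + 1 / rho * (- c * rho * r1 * (v1 * k1) + c * rho * r2 * (v2 * k2) + 0 * (v3 * k3) + 0 * (v4 * k4))
          = (k1 * g1 + k2 * g2 + l3 / k3 * g3 + m4 / k4 * g4) * sn"
    unfolding t1 t2 t3 t4 using k3 k4 rho by (simp add: field_simps)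
  show "(l1 * t1 + l2 * t2 + (-1) * t3 + 0 * t4)
          + U0 * (l1 * (v1 * k1) + l2 * (v2 * k2) + (-1) * (v3 * k3) + 0 * (v4 * k4))
          + 1 / rho * (- c * rho * r1 * (v1 * l1) + c * rho * r2 * (v2 * l2) + 0 * (v3 * l3) + 0 * (v4 * l4))
          = (l1 * g1 + l2 * g2 + (-1) * g3 + 0 * g4) * sn"
    unfolding t1 t2 t3 t4 using k3 k4 rho by (simp add: field_simps)
  show "(m1 * t1 + m2 * t2 + 0 * t3 + (-1) * t4)
          + U0 * (m1 * (v1 * k1) + m2 * (v2 * k2) + 0 * (v3 * k3) + (-1) * (v4 * k4))
          + 1 / rho * (- c * rho * r1 * (v1 * m1) + c * rho * r2 * (v2 * m2) + 0 * (v3 * m3) + 0 * (v4 * m4))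
          = (m1 * g1 + m2 * g2 + 0 * g3 + (-1) * g4) * sn"
    unfolding t1 t2 t3 t4 using k3 k4 rho by (simp add: field_simps)
  have e1: "r1 * r1 = k1 * k1 + l1 * l1 + m1 * m1" using r1 by (simp add: power2_eq_square)
  have e2: "r2 * r2 = k2 * k2 + l2 * l2 + m2 * m2" using r2 by (simp add: power2_eq_square)
  show "(- c * rho * r1 * t1 + c * rho * r2 * t2 + 0 * t3 + 0 * t4)
          + U0 * (- c * rho * r1 * (v1 * k1) + c * rho * r2 * (v2 * k2) + 0 * (v3 * k3) + 0 * (v4 * k4))
          + rho * c^2 * ((k1 * (v1 * k1) + k2 * (v2 * k2) + l3 / k3 * (v3 * k3) + m4 / k4 * (v4 * k4))
               + (l1 * (v1 * l1) + l2 * (v2 * l2) + (-1) * (v3 * l3) + 0 * (v4 * l4))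
               + (m1 * (v1 * m1) + m2 * (v2 * m2) + 0 * (v3 * m3) + (-1) * (v4 * m4)))
          = (- c * rho * r1 * g1 + c * rho * r2 * g2 + 0 * g3 + 0 * g4) * sn"
  proof -
    have "rho * c^2 * ((k1 * (v1 * k1) + k2 * (v2 * k2) + l3 / k3 * (v3 * k3) + m4 / k4 * (v4 * k4))
               + (l1 * (v1 * l1) + l2 * (v2 * l2) + (-1) * (v3 * l3) + 0 * (v4 * l4))
               + (m1 * (v1 * m1) + m2 * (v2 * m2) + 0 * (v3 * m3) + (-1) * (v4 * m4)))
        = rho * c^2 * (v1 * (r1 * r1) + v2 * (r2 * r2))"
      unfolding e1 e2 using k3 k4 by (simp add: field_simps)
    then show ?thesis unfolding t1 t2 t3 t4 by (simp add: algebra_simps power2_eq_square)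
  qed
qed

lemma inv4:
  fixes c rho X Y Z Pp g1 g2 g3 g4 :: real and k l m :: "nat \<Rightarrow> real"
  assumes k3: "k 3 \<noteq> 0" and k4: "k 4 \<noteq> 0" and D: "Delta_Z2 c rho k l m \<noteq> 0"
    and X: "X = k 1 * g1 + k 2 * g2 + l 3 / k 3 * g3 + m 4 / k 4 * g4"
    and Y: "Y = l 1 * g1 + l 2 * g2 - g3" and Z: "Z = m 1 * g1 + m 2 * g2 - g4"
    and P: "Pp = - c * rho * r_coef k l m 1 * g1 + c * rho * r_coef k l m 2 * g2"
  shows "g1 = (c * rho * r_coef k l m 2 * (X + l 3 / k 3 * Y + m 4 / k 4 * Z)
               - (k 2 + l 3 * l 2 / k 3 + m 4 * m 2 / k 4) * Pp) / Delta_Z2 c rho k l m"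
    and "g2 = (c * rho * r_coef k l m 1 * (X + l 3 / k 3 * Y + m 4 / k 4 * Z)
               + (k 1 + l 3 * l 1 / k 3 + m 4 * m 1 / k 4) * Pp) / Delta_Z2 c rho k l m"
    and "g3 = l 1 * g1 + l 2 * g2 - Y"
    and "g4 = m 1 * g1 + m 2 * g2 - Z"
proof -
  define a1 where "a1 = k 1 + l 3 * l 1 / k 3 + m 4 * m 1 / k 4"
  define a2 where "a2 = k 2 + l 3 * l 2 / k 3 + m 4 * m 2 / k 4"
  define r1 where "r1 = r_coef k l m 1"
  define r2 where "r2 = r_coef k l m 2"
  have X': "X + l 3 / k 3 * Y + m 4 / k 4 * Z = a1 * g1 + a2 * g2"
    unfolding X Y Z a1_def a2_def using k3 k4 by (simp add: field_simps)
  have DD: "Delta_Z2 c rho k l m = c * rho * (r1 * a2 + r2 * a1)"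
    unfolding Delta_Z2_def a1_def a2_def r1_def r2_def using k3 k4 by (simp add: field_simps)
  show "g1 = (c * rho * r_coef k l m 2 * (X + l 3 / k 3 * Y + m 4 / k 4 * Z)
               - (k 2 + l 3 * l 2 / k 3 + m 4 * m 2 / k 4) * Pp) / Delta_Z2 c rho k l m"
    unfolding X' a2_def[symmetric] r2_def[symmetric] P r1_def[symmetric] using D unfolding DD
    by (simp add: field_simps)
  show "g2 = (c * rho * r_coef k l m 1 * (X + l 3 / k 3 * Y + m 4 / k 4 * Z)
               + (k 1 + l 3 * l 1 / k 3 + m 4 * m 1 / k 4) * Pp) / Delta_Z2 c rho k l m"
    unfolding X' a1_def[symmetric] r2_def[symmetric] P r1_def[symmetric] using D unfolding DD
    by (simp add: field_simps)
  show "g3 = l 1 * g1 + l 2 * g2 - Y" using Y by simp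
  show "g4 = m 1 * g1 + m 2 * g2 - Z" using Z by simp
qed

lemma limsup_le0:
  fixes g :: "real \<Rightarrow> real"
  assumes bd: "\<And>t. t \<ge> 0 \<Longrightarrow> \<bar>g t\<bar> \<le> K * (1 + t)"
  shows "Limsup at_top (\<lambda>t. ereal (ln \<bar>g t\<bar> / t)) \<le> 0"
proof -
  define K' where "K' = max K 1"
  have K': "K' \<ge> 1" by (simp add: K'_def)
  have ev: "\<forall>\<^sub>F t in at_top. ereal (ln \<bar>g t\<bar> / t) \<le> ereal (ln (2*K') / t + ln t / t)"
  proof (rule eventually_mono[OF eventually_ge_at_top[of 1]])
    fix t :: real assume t: "1 \<le> t"
    have "1 * 1 \<le> K' * (1 + t)" by (rule mult_mono) (use K' t in auto)
    then have pos: "K' * (1 + t) \<ge> 1" by simp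
    have "ln \<bar>g t\<bar> \<le> ln (K' * (1 + t))"
    proof (cases "g t = 0")
      case True then show ?thesis using pos by simp
    next
      case False
      have "\<bar>g t\<bar> \<le> K * (1 + t)" using bd t by simp
      also have "\<dots> \<le> K' * (1 + t)" using t by (intro mult_right_mono) (auto simp: K'_def)
      finally show ?thesis using False by simp
    qed
    also have "ln (K' * (1 + t)) \<le> ln (2*K' * t)"
    proof -
      have "K' * (1 + t) \<le> K' * (2 * t)" by (rule mult_left_mono) (use K' t in auto)
      then show ?thesis using pos by (simp add: mult.assoc)
    qed
    also have "ln (2*K' * t) = ln (2*K') + ln t" using K' t by (simp add: ln_mult)
    finally have "ln \<bar>g t\<bar> / t \<le> (ln (2*K') + ln t) / t" using t by (simp add: divide_right_mono)
    then show "ereal (ln \<bar>g t\<bar> / t) \<le> ereal (ln (2*K') / t + ln t / t)" by (simp add: add_divide_distrib)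
  qed
  have lim: "((\<lambda>t. ln (2*K') / t + ln t / t) \<longlongrightarrow> 0) at_top"
  proof -
    have a: "((\<lambda>t::real. ln (2*K') / t) \<longlongrightarrow> 0) at_top"
      by (rule tendsto_divide_0[OF tendsto_const]) (rule filterlim_mono[OF filterlim_ident at_top_le_at_infinity order_refl])
    have b: "((\<lambda>t::real. ln t / t) \<longlongrightarrow> 0) at_top" by (rule ln_x_over_x_tendsto_0)
    from tendsto_add[OF a b] show ?thesis by simp
  qed
  have "Limsup at_top (\<lambda>t. ereal (ln \<bar>g t\<bar> / t)) \<le> Limsup at_top (\<lambda>t. ereal (ln (2*K') / t + ln t / t))"
    by (rule Limsup_mono[OF ev])
  also have "\<dots> = 0"
    using lim_imp_Limsup[OF _ tendsto_ereal[OF lim]] by (simp add: zero_ereal_def)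
  finally show ?thesis .
qed

lemma limsup_neg_tendsto:
  fixes g :: "real \<Rightarrow> real"
  assumes "Limsup at_top (\<lambda>t. ereal (ln \<bar>g t\<bar> / t)) < 0"
  shows "(g \<longlongrightarrow> 0) at_top"
proof -
  obtain r where r1: "Limsup at_top (\<lambda>t. ereal (ln \<bar>g t\<bar> / t)) < ereal r" and r2: "ereal r < 0"
    using ereal_dense2[OF assms] by blast
  have r: "r < 0" using r2 by simp
  have ev: "\<forall>\<^sub>F t in at_top. ereal (ln \<bar>g t\<bar> / t) < ereal r" by (rule Limsup_lessD[OF r1])
  have ev2: "\<forall>\<^sub>F t in at_top. norm (g t) \<le> exp (r * t)"
  proof (rule eventually_mono[OF eventually_conj[OF ev eventually_gt_at_top[of 0]]])
    fix t :: real assume h: "ereal (ln \<bar>g t\<bar> / t) < ereal r \<and> 0 < t"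
    show "norm (g t) \<le> exp (r * t)"
    proof (cases "g t = 0")
      case True then show ?thesis by simp
    next
      case False
      from h have "ln \<bar>g t\<bar> < r * t" by (simp add: divide_less_eq)
      then have "exp (ln \<bar>g t\<bar>) < exp (r * t)" by simp
      then show ?thesis using False by simp
    qed
  qed
  have "((\<lambda>t. exp (r * t)) \<longlongrightarrow> 0) at_top"
  proof -
    have "filterlim (\<lambda>t::real. r * t) at_bot at_top"
      by (rule filterlim_tendsto_neg_mult_at_bot[OF tendsto_const r filterlim_ident])
    then show ?thesis by (rule filterlim_compose[OF exp_at_bot])
  qed
  then show ?thesis by (rule Lim_null_comparison[OF ev2])
qed

lemma limsup_eq0:
  fixes g :: "real \<Rightarrow> real"
  assumes "\<And>t. t \<ge> 0 \<Longrightarrow> g t = 0"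
  shows "Limsup at_top (\<lambda>t. ereal (ln \<bar>g t\<bar> / t)) = 0"
proof -
  have "\<forall>\<^sub>F t in at_top. ereal (ln \<bar>g t\<bar> / t) = 0"
    by (rule eventually_mono[OF eventually_ge_at_top[of 0]]) (use assms in simp)
  then have "((\<lambda>t. ereal (ln \<bar>g t\<bar> / t)) \<longlongrightarrow> 0) at_top" by (rule tendsto_eventually)
  then show ?thesis by (rule lim_imp_Limsup[rotated]) simp
qed

lemma lin_sub: "A + u * B + v * C = S \<Longrightarrow> A' + u * B' + v * C' = S \<Longrightarrow> (A - A') + u * (B - B') + v * (C - C') = (0::real)"
  by (simp add: algebra_simps)
lemma lin_sub2: "A + u * B + w * (C1 + C2 + C3) = S \<Longrightarrow> A' + u * B' + w * (C1' + C2' + C3') = S \<Longrightarrow>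
   (A - A') + u * (B - B') + w * ((C1 - C1') + (C2 - C2') + (C3 - C3')) = (0::real)"
  by (simp add: algebra_simps)

lemma abs3: "\<bar>p + q + r\<bar> \<le> \<bar>p\<bar> + \<bar>q\<bar> + \<bar>r::real\<bar>"
  using abs_triangle_ineq[of "p+q" r] abs_triangle_ineq[of p q] by linarith
lemma abs4: "\<bar>p + q + r + s\<bar> \<le> \<bar>p\<bar> + \<bar>q\<bar> + \<bar>r\<bar> + \<bar>s::real\<bar>"
  using abs_triangle_ineq[of "p+q+r" s] abs3[of p q r] by linarith

lemma lin_bd:
  fixes X Y Z P K a b c d D :: real
  assumes "\<bar>X\<bar> \<le> K" "\<bar>Y\<bar> \<le> K" "\<bar>Z\<bar> \<le> K" "\<bar>P\<bar> \<le> K"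
  shows "\<bar>(a * (X + b * Y + c * Z) + d * P) / D\<bar> \<le> (\<bar>a\<bar> * (1 + \<bar>b\<bar> + \<bar>c\<bar>) + \<bar>d\<bar>) * K / \<bar>D\<bar>"
proof -
  have "\<bar>a * (X + b * Y + c * Z) + d * P\<bar> \<le> \<bar>a\<bar> * (\<bar>X\<bar> + \<bar>b\<bar> * \<bar>Y\<bar> + \<bar>c\<bar> * \<bar>Z\<bar>) + \<bar>d\<bar> * \<bar>P\<bar>"
  proof -
    have "\<bar>X + b * Y + c * Z\<bar> \<le> \<bar>X\<bar> + \<bar>b\<bar> * \<bar>Y\<bar> + \<bar>c\<bar> * \<bar>Z\<bar>"
      using abs3[of X "b*Y" "c*Z"] by (simp add: abs_mult)
    then have "\<bar>a\<bar> * \<bar>X + b * Y + c * Z\<bar> \<le> \<bar>a\<bar> * (\<bar>X\<bar> + \<bar>b\<bar> * \<bar>Y\<bar> + \<bar>c\<bar> * \<bar>Z\<bar>)"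
      by (rule mult_left_mono) simp
    then show ?thesis using abs_triangle_ineq[of "a * (X + b * Y + c * Z)" "d * P"] by (simp add: abs_mult)
  qed
  also have "\<dots> \<le> \<bar>a\<bar> * (K + \<bar>b\<bar> * K + \<bar>c\<bar> * K) + \<bar>d\<bar> * K"
    using assms by (intro add_mono mult_left_mono) auto
  also have "\<dots> = (\<bar>a\<bar> * (1 + \<bar>b\<bar> + \<bar>c\<bar>) + \<bar>d\<bar>) * K" by (simp add: algebra_simps)
  finally show ?thesis by (simp add: divide_right_mono abs_divide)
qed

lemma lin_bd_minus:
  fixes X Y Z P K a b c d D :: real
  assumes "\<bar>X\<bar> \<le> K" "\<bar>Y\<bar> \<le> K" "\<bar>Z\<bar> \<le> K" "\<bar>P\<bar> \<le> K"
  shows "\<bar>(a * (X + b * Y + c * Z) - d * P) / D\<bar> \<le> (\<bar>a\<bar> * (1 + \<bar>b\<bar> + \<bar>c\<bar>) + \<bar>d\<bar>) * K / \<bar>D\<bar>"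
  using lin_bd[OF assms, of a b c "-d" D] by simp

lemma lin4_bd:
  fixes u1 u2 u3 u4 a1 a2 a3 a4 B1 B2 B3 B4 T :: real
  assumes "\<bar>u1\<bar> \<le> B1 * T" "\<bar>u2\<bar> \<le> B2 * T" "\<bar>u3\<bar> \<le> B3 * T" "\<bar>u4\<bar> \<le> B4 * T"
  shows "\<bar>a1 * u1 + a2 * u2 + a3 * u3 + a4 * u4\<bar> \<le> (\<bar>a1\<bar> * B1 + \<bar>a2\<bar> * B2 + \<bar>a3\<bar> * B3 + \<bar>a4\<bar> * B4) * T"
proof -
  have "\<bar>a1 * u1 + a2 * u2 + a3 * u3 + a4 * u4\<bar> \<le> \<bar>a1\<bar> * \<bar>u1\<bar> + \<bar>a2\<bar> * \<bar>u2\<bar> + \<bar>a3\<bar> * \<bar>u3\<bar> + \<bar>a4\<bar> * \<bar>u4\<bar>"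
    using abs4[of "a1*u1" "a2*u2" "a3*u3" "a4*u4"] by (simp add: abs_mult)
  also have "\<dots> \<le> \<bar>a1\<bar> * (B1 * T) + \<bar>a2\<bar> * (B2 * T) + \<bar>a3\<bar> * (B3 * T) + \<bar>a4\<bar> * (B4 * T)"
    using assms by (intro add_mono mult_left_mono) auto
  finally show ?thesis by (simp add: algebra_simps)
qed

lemma T_bd:
  fixes S t om :: real
  assumes "S \<ge> 0" "t \<ge> 0"
  shows "S * (2 / \<bar>om\<bar> + 2 * t) \<le> (S * (2 / \<bar>om\<bar> + 2)) * (1 + t)"
proof -
  have g: "a + 2 * t \<le> (a + 2) * (1 + t)" if "a \<ge> 0" for a :: real
  proof -
    have "0 \<le> a * t" using that assms by simp
    then show ?thesis by (simp add: algebra_simps)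
  qed
  have "2 / \<bar>om\<bar> + 2 * t \<le> (2 / \<bar>om\<bar> + 2) * (1 + t)" by (rule g) simp
  then show ?thesis using assms(1) by (metis mult.assoc mult_left_mono)
qed

lemma growth_max0:
  fixes a b c d :: ereal
  assumes "a \<le> 0" "b \<le> 0" "c \<le> 0" "d \<le> 0" "a \<ge> 0 \<or> b \<ge> 0 \<or> c \<ge> 0 \<or> d \<ge> 0"
  shows "max (max a b) (max c d) = 0"
  using assms by (auto simp: max_def)

lemma comp_growth_le0:
  assumes "\<And>x y z. Limsup at_top (\<lambda>t. ereal (ln \<bar>w x y z t\<bar> / t)) \<le> 0"
  shows "comp_growth w \<le> 0"
  unfolding comp_growth_def using assms by (auto intro!: SUP_least)

lemma comp_growth_ge:
  "Limsup at_top (\<lambda>t. ereal (ln \<bar>w x y z t\<bar> / t)) \<le> comp_growth w"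
  unfolding comp_growth_def by (rule SUP_upper2[of "(x,y,z)"]) auto

theorem proposition25:
  fixes U0 c0 rho0 omega_f :: real
    and k l m :: "nat \<Rightarrow> real"
    and F G H P :: "real \<Rightarrow> real \<Rightarrow> real \<Rightarrow> real"
    and vx vy vz p :: "real \<Rightarrow> real \<Rightarrow> real \<Rightarrow> real \<Rightarrow> real"
  assumes "U0 > 0" and "c0 > 0" and "rho0 > 0"
    and "k 1 * k 2 * k 3 * k 4 \<noteq> 0"
    and "Delta_Z2 c0 rho0 k l m \<noteq> 0"
    and "in_Z2 c0 rho0 k l m F G H P"
    and "is_solution U0 c0 rho0 omega_f F G H P vx vy vz p"
  shows "growth_rate vx vy vz p = 0"
proof -
  have c0: "c0 > 0" and rho0: "rho0 > 0" using assms by auto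
  have k1: "k 1 \<noteq> 0" and k2: "k 2 \<noteq> 0" and k3: "k 3 \<noteq> 0" and k4: "k 4 \<noteq> 0" using assms(4) by auto
  have Dl: "Delta_Z2 c0 rho0 k l m \<noteq> 0" using assms(5) .
  note Z = assms(6)[unfolded in_Z2_def]
  note SOL = assms(7)[unfolded is_solution_def]
  have Cvx: "C1_4 vx" and Cvy: "C1_4 vy" and Cvz: "C1_4 vz" and Cp: "C1_4 p" using SOL by auto
  have zero: "vx x y z t = 0 \<and> vy x y z t = 0 \<and> vz x y z t = 0 \<and> p x y z t = 0" if "t \<le> 0" for x y z t
    using SOL that by blast
  have eqs: "pdt vx x y z t + U0 * pdx vx x y z t + (1 / rho0) * pdx p x y z t = heaviside t * F x y z * sin (omega_f * t)
     \<and> pdt vy x y z t + U0 * pdx vy x y z t + (1 / rho0) * pdy p x y z t = heaviside t * G x y z * sin (omega_f * t)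
     \<and> pdt vz x y z t + U0 * pdx vz x y z t + (1 / rho0) * pdz p x y z t = heaviside t * H x y z * sin (omega_f * t)
     \<and> pdt p x y z t + U0 * pdx p x y z t + rho0 * c0\<^sup>2 * (pdx vx x y z t + pdy vy x y z t + pdz vz x y z t)
        = heaviside t * P x y z * sin (omega_f * t)" for x y z t
    using SOL by blast
  obtain f :: "nat \<Rightarrow> real \<Rightarrow> real" where fC: "\<forall>i\<in>{1..4}. f i C1_differentiable_on UNIV"
    and rep: "\<forall>x y z. let \<xi> = (\<lambda>i. k i * x + l i * y + m i * z) in
           F x y z = k 1 * f 1 (\<xi> 1) + k 2 * f 2 (\<xi> 2) + l 3 / k 3 * f 3 (\<xi> 3) + m 4 / k 4 * f 4 (\<xi> 4) \<and>
           G x y z = l 1 * f 1 (\<xi> 1) + l 2 * f 2 (\<xi> 2) - f 3 (\<xi> 3) \<and>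
           H x y z = m 1 * f 1 (\<xi> 1) + m 2 * f 2 (\<xi> 2) - f 4 (\<xi> 4) \<and>
           P x y z = - c0 * rho0 * r_coef k l m 1 * f 1 (\<xi> 1) + c0 * rho0 * r_coef k l m 2 * f 2 (\<xi> 2)"
    using Z by blast
  have bF: "bounded (range (\<lambda>(x,y,z). F x y z))" "bounded (range (\<lambda>(x,y,z). G x y z))"
    "bounded (range (\<lambda>(x,y,z). H x y z))" "bounded (range (\<lambda>(x,y,z). P x y z))" using Z by auto

  have repF: "F x y z = k 1 * f 1 (k 1 * x + l 1 * y + m 1 * z) + k 2 * f 2 (k 2 * x + l 2 * y + m 2 * z) + l 3 / k 3 * f 3 (k 3 * x + l 3 * y + m 3 * z) + m 4 / k 4 * f 4 (k 4 * x + l 4 * y + m 4 * z)"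
    and repG: "G x y z = l 1 * f 1 (k 1 * x + l 1 * y + m 1 * z) + l 2 * f 2 (k 2 * x + l 2 * y + m 2 * z) - f 3 (k 3 * x + l 3 * y + m 3 * z)"
    and repH: "H x y z = m 1 * f 1 (k 1 * x + l 1 * y + m 1 * z) + m 2 * f 2 (k 2 * x + l 2 * y + m 2 * z) - f 4 (k 4 * x + l 4 * y + m 4 * z)"
    and repP: "P x y z = - c0 * rho0 * r_coef k l m 1 * f 1 (k 1 * x + l 1 * y + m 1 * z) + c0 * rho0 * r_coef k l m 2 * f 2 (k 2 * x + l 2 * y + m 2 * z)" for x y z
    using rep[rule_format, of x y z] by (simp_all add: Let_def)
  have fd: "\<exists>D. (\<forall>x. (f i has_real_derivative D x) (at x)) \<and> continuous_on UNIV D" if "i \<in> {1..4}" for i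
    using fC that by (auto simp: C1_differentiable_on_def has_real_derivative_iff_has_vector_derivative)

  obtain u1 ux1 ut1 where S1: "sol1d (f 1) (U0 * k 1 - c0 * r_coef k l m 1) omega_f u1 ux1 ut1"
    using fd[of 1] one_d by fastforce
  have PM1: "P4 (\<lambda>x y z t. u1 (k 1 * x + l 1 * y + m 1 * z) t) (\<lambda>x y z t. ux1 (k 1 * x + l 1 * y + m 1 * z) t * k 1) (\<lambda>x y z t. ux1 (k 1 * x + l 1 * y + m 1 * z) t * l 1) (\<lambda>x y z t. ux1 (k 1 * x + l 1 * y + m 1 * z) t * m 1) (\<lambda>x y z t. ut1 (k 1 * x + l 1 * y + m 1 * z) t)"
    by (rule mode_P4[OF S1])
  have pde1: "ut1 \<xi> t = f 1 \<xi> * sin (omega_f * t) - (U0 * k 1 - c0 * r_coef k l m 1) * ux1 \<xi> t" for \<xi> t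
    using S1 unfolding sol1d_def by (simp add: algebra_simps)
  have u10: "u1 \<xi> 0 = 0" for \<xi> using S1 unfolding sol1d_def by blast

  obtain u2 ux2 ut2 where S2: "sol1d (f 2) (U0 * k 2 + c0 * r_coef k l m 2) omega_f u2 ux2 ut2"
    using fd[of 2] one_d by fastforce
  have PM2: "P4 (\<lambda>x y z t. u2 (k 2 * x + l 2 * y + m 2 * z) t) (\<lambda>x y z t. ux2 (k 2 * x + l 2 * y + m 2 * z) t * k 2) (\<lambda>x y z t. ux2 (k 2 * x + l 2 * y + m 2 * z) t * l 2) (\<lambda>x y z t. ux2 (k 2 * x + l 2 * y + m 2 * z) t * m 2) (\<lambda>x y z t. ut2 (k 2 * x + l 2 * y + m 2 * z) t)"
    by (rule mode_P4[OF S2])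
  have pde2: "ut2 \<xi> t = f 2 \<xi> * sin (omega_f * t) - (U0 * k 2 + c0 * r_coef k l m 2) * ux2 \<xi> t" for \<xi> t
    using S2 unfolding sol1d_def by (simp add: algebra_simps)
  have u20: "u2 \<xi> 0 = 0" for \<xi> using S2 unfolding sol1d_def by blast

  obtain u3 ux3 ut3 where S3: "sol1d (f 3) (U0 * k 3) omega_f u3 ux3 ut3"
    using fd[of 3] one_d by fastforce
  have PM3: "P4 (\<lambda>x y z t. u3 (k 3 * x + l 3 * y + m 3 * z) t) (\<lambda>x y z t. ux3 (k 3 * x + l 3 * y + m 3 * z) t * k 3) (\<lambda>x y z t. ux3 (k 3 * x + l 3 * y + m 3 * z) t * l 3) (\<lambda>x y z t. ux3 (k 3 * x + l 3 * y + m 3 * z) t * m 3) (\<lambda>x y z t. ut3 (k 3 * x + l 3 * y + m 3 * z) t)"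
    by (rule mode_P4[OF S3])
  have pde3: "ut3 \<xi> t = f 3 \<xi> * sin (omega_f * t) - (U0 * k 3) * ux3 \<xi> t" for \<xi> t
    using S3 unfolding sol1d_def by (simp add: algebra_simps)
  have u30: "u3 \<xi> 0 = 0" for \<xi> using S3 unfolding sol1d_def by blast

  obtain u4 ux4 ut4 where S4: "sol1d (f 4) (U0 * k 4) omega_f u4 ux4 ut4"
    using fd[of 4] one_d by fastforce
  have PM4: "P4 (\<lambda>x y z t. u4 (k 4 * x + l 4 * y + m 4 * z) t) (\<lambda>x y z t. ux4 (k 4 * x + l 4 * y + m 4 * z) t * k 4) (\<lambda>x y z t. ux4 (k 4 * x + l 4 * y + m 4 * z) t * l 4) (\<lambda>x y z t. ux4 (k 4 * x + l 4 * y + m 4 * z) t * m 4) (\<lambda>x y z t. ut4 (k 4 * x + l 4 * y + m 4 * z) t)"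
    by (rule mode_P4[OF S4])
  have pde4: "ut4 \<xi> t = f 4 \<xi> * sin (omega_f * t) - (U0 * k 4) * ux4 \<xi> t" for \<xi> t
    using S4 unfolding sol1d_def by (simp add: algebra_simps)
  have u40: "u4 \<xi> 0 = 0" for \<xi> using S4 unfolding sol1d_def by blast

  have PWx: "P4 (\<lambda>x y z t. k 1 * u1 (k 1 * x + l 1 * y + m 1 * z) t + k 2 * u2 (k 2 * x + l 2 * y + m 2 * z) t + l 3 / k 3 * u3 (k 3 * x + l 3 * y + m 3 * z) t + m 4 / k 4 * u4 (k 4 * x + l 4 * y + m 4 * z) t) (\<lambda>x y z t. k 1 * (ux1 (k 1 * x + l 1 * y + m 1 * z) t * k 1) + k 2 * (ux2 (k 2 * x + l 2 * y + m 2 * z) t * k 2) + l 3 / k 3 * (ux3 (k 3 * x + l 3 * y + m 3 * z) t * k 3) + m 4 / k 4 * (ux4 (k 4 * x + l 4 * y + m 4 * z) t * k 4)) (\<lambda>x y z t. k 1 * (ux1 (k 1 * x + l 1 * y + m 1 * z) t * l 1) + k 2 * (ux2 (k 2 * x + l 2 * y + m 2 * z) t * l 2) + l 3 / k 3 * (ux3 (k 3 * x + l 3 * y + m 3 * z) t * l 3) + m 4 / k 4 * (ux4 (k 4 * x + l 4 * y + m 4 * z) t * l 4)) (\<lambda>x y z t. k 1 * (ux1 (k 1 * x + l 1 * y + m 1 * z) t * m 1) + k 2 * (ux2 (k 2 * x + l 2 * y + m 2 * z) t * m 2) + l 3 / k 3 * (ux3 (k 3 * x + l 3 * y + m 3 *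 z) t * m 3) + m 4 / k 4 * (ux4 (k 4 * x + l 4 * y + m 4 * z) t * m 4)) (\<lambda>x y z t. k 1 * ut1 (k 1 * x + l 1 * y + m 1 * z) t + k 2 * ut2 (k 2 * x + l 2 * y + m 2 * z) t + l 3 / k 3 * ut3 (k 3 * x + l 3 * y + m 3 * z) t + m 4 / k 4 * ut4 (k 4 * x + l 4 * y + m 4 * z) t)"
    by (rule P4_lin4[OF PM1 PM2 PM3 PM4])

  have PWy: "P4 (\<lambda>x y z t. l 1 * u1 (k 1 * x + l 1 * y + m 1 * z) t + l 2 * u2 (k 2 * x + l 2 * y + m 2 * z) t + -1 * u3 (k 3 * x + l 3 * y + m 3 * z) t + 0 * u4 (k 4 * x + l 4 * y + m 4 * z) t) (\<lambda>x y z t. l 1 * (ux1 (k 1 * x + l 1 * y + m 1 * z) t * k 1) + l 2 * (ux2 (k 2 * x + l 2 * y + m 2 * z) t * k 2) + -1 * (ux3 (k 3 * x + l 3 * y + m 3 * z) t * k 3) + 0 * (ux4 (k 4 * x + l 4 * y + m 4 * z) t * k 4)) (\<lambda>x y z t. l 1 * (ux1 (k 1 * x + l 1 * y + m 1 * z) t * l 1) + l 2 * (ux2 (k 2 * x + l 2 * y + m 2 * z) t * l 2) + -1 * (ux3 (k 3 * x + l 3 * y + m 3 * z) t * l 3) + 0 * (ux4 (k 4 * x + l 4 * y + m 4 * z) t * l 4)) (\<lambda>x y z t. l 1 * (ux1 (k 1 * x + l 1 * y + m 1 * z) t * m 1) + l 2 * (ux2 (k 2 * x + l 2 * y + m 2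 * z) t * m 2) + -1 * (ux3 (k 3 * x + l 3 * y + m 3 * z) t * m 3) + 0 * (ux4 (k 4 * x + l 4 * y + m 4 * z) t * m 4)) (\<lambda>x y z t. l 1 * ut1 (k 1 * x + l 1 * y + m 1 * z) t + l 2 * ut2 (k 2 * x + l 2 * y + m 2 * z) t + -1 * ut3 (k 3 * x + l 3 * y + m 3 * z) t + 0 * ut4 (k 4 * x + l 4 * y + m 4 * z) t)"
    by (rule P4_lin4[OF PM1 PM2 PM3 PM4])

  have PWz: "P4 (\<lambda>x y z t. m 1 * u1 (k 1 * x + l 1 * y + m 1 * z) t + m 2 * u2 (k 2 * x + l 2 * y + m 2 * z) t + 0 * u3 (k 3 * x + l 3 * y + m 3 * z) t + -1 * u4 (k 4 * x + l 4 * y + m 4 * z) t) (\<lambda>x y z t. m 1 * (ux1 (k 1 * x + l 1 * y + m 1 * z) t * k 1) + m 2 * (ux2 (k 2 * x + l 2 * y + m 2 * z) t * k 2) + 0 * (ux3 (k 3 * x + l 3 * y + m 3 * z) t * k 3) + -1 * (ux4 (k 4 * x + l 4 * y + m 4 * z) t * k 4)) (\<lambda>x y z t. m 1 * (ux1 (k 1 * x + l 1 * y + m 1 * z) t * l 1) + m 2 * (ux2 (k 2 * x + l 2 * y + m 2 * z) t * l 2) + 0 * (ux3 (k 3 * x + l 3 * y + m 3 * z) t * l 3) + -1 * (ux4 (k 4 * x + l 4 * y + m 4 * z) t * l 4)) (\<lambda>x y z t. m 1 * (ux1 (k 1 * x + l 1 * y + m 1 * z) t * m 1) + m 2 * (ux2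 (k 2 * x + l 2 * y + m 2 * z) t * m 2) + 0 * (ux3 (k 3 * x + l 3 * y + m 3 * z) t * m 3) + -1 * (ux4 (k 4 * x + l 4 * y + m 4 * z) t * m 4)) (\<lambda>x y z t. m 1 * ut1 (k 1 * x + l 1 * y + m 1 * z) t + m 2 * ut2 (k 2 * x + l 2 * y + m 2 * z) t + 0 * ut3 (k 3 * x + l 3 * y + m 3 * z) t + -1 * ut4 (k 4 * x + l 4 * y + m 4 * z) t)"
    by (rule P4_lin4[OF PM1 PM2 PM3 PM4])

  have PWp: "P4 (\<lambda>x y z t. - c0 * rho0 * r_coef k l m 1 * u1 (k 1 * x + l 1 * y + m 1 * z) t + c0 * rho0 * r_coef k l m 2 * u2 (k 2 * x + l 2 * y + m 2 * z) t + 0 * u3 (k 3 * x + l 3 * y + m 3 * z) t + 0 * u4 (k 4 * x + l 4 * y + m 4 * z) t) (\<lambda>x y z t. - c0 * rho0 * r_coef k l m 1 * (ux1 (k 1 * x + l 1 * y + m 1 * z) t * k 1) + c0 * rho0 * r_coef k l m 2 * (ux2 (k 2 * x + l 2 * y + m 2 * z) t * k 2) + 0 * (ux3 (k 3 * x + l 3 * y + m 3 * z) t * k 3) + 0 * (ux4 (k 4 * x + l 4 * y + m 4 * z) t * k 4)) (\<lambda>x y z t. - c0 * rho0 * r_coef k l m 1 * (ux1 (k 1 * x + l 1 * y + m 1 * z) t * l 1) + c0 * rho0 * r_coef k l m 2 * (ux2 (k 2 * x + l 2 * y + m 2 * z) t * l 2) + 0 * (ux3 (k 3 * x + l 3 *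 y + m 3 * z) t * l 3) + 0 * (ux4 (k 4 * x + l 4 * y + m 4 * z) t * l 4)) (\<lambda>x y z t. - c0 * rho0 * r_coef k l m 1 * (ux1 (k 1 * x + l 1 * y + m 1 * z) t * m 1) + c0 * rho0 * r_coef k l m 2 * (ux2 (k 2 * x + l 2 * y + m 2 * z) t * m 2) + 0 * (ux3 (k 3 * x + l 3 * y + m 3 * z) t * m 3) + 0 * (ux4 (k 4 * x + l 4 * y + m 4 * z) t * m 4)) (\<lambda>x y z t. - c0 * rho0 * r_coef k l m 1 * ut1 (k 1 * x + l 1 * y + m 1 * z) t + c0 * rho0 * r_coef k l m 2 * ut2 (k 2 * x + l 2 * y + m 2 * z) t + 0 * ut3 (k 3 * x + l 3 * y + m 3 * z) t + 0 * ut4 (k 4 * x + l 4 * y + m 4 * z) t)"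
    by (rule P4_lin4[OF PM1 PM2 PM3 PM4])

  have r1sq: "(r_coef k l m 1)^2 = (k 1)^2 + (l 1)^2 + (m 1)^2" by (simp add: r_coef_def)
  have r2sq: "(r_coef k l m 2)^2 = (k 2)^2 + (l 2)^2 + (m 2)^2" by (simp add: r_coef_def)
  have rho0ne: "rho0 \<noteq> 0" using rho0 by simp
  note PA = pde_alg[OF k3 k4 rho0ne r1sq r2sq]

  have WE1: "k 1 * ut1 (k 1 * x + l 1 * y + m 1 * z) t + k 2 * ut2 (k 2 * x + l 2 * y + m 2 * z) t + l 3 / k 3 * ut3 (k 3 * x + l 3 * y + m 3 * z) t + m 4 / k 4 * ut4 (k 4 * x + l 4 * y + m 4 * z) t + U0 * (k 1 * (ux1 (k 1 * x + l 1 * y + m 1 * z) t * k 1) + k 2 * (ux2 (k 2 * x + l 2 * y + m 2 * z) t * k 2) + l 3 / k 3 * (ux3 (k 3 * x + l 3 * y + m 3 * z) t * k 3) + m 4 / k 4 * (ux4 (k 4 * x + l 4 * y + m 4 * z) t * k 4)) + (1 / rho0) * (- c0 * rho0 * r_coef k l m 1 * (ux1 (k 1 * x + l 1 * y + m 1 * z) t * k 1) + c0 * rho0 * r_coef k l m 2 * (ux2 (k 2 * x + l 2 * y + m 2 * z) t * k 2) + 0 * (ux3 (k 3 * x + l 3 * y + m 3 * z) t * k 3) + 0 * (ux4 (k 4 * x + l 4 * y + m 4 * z) t * k 4)) = F x y z * sin (omega_f * t)" for x y z t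
  proof -
    have "k 1 * ut1 (k 1 * x + l 1 * y + m 1 * z) t + k 2 * ut2 (k 2 * x + l 2 * y + m 2 * z) t + l 3 / k 3 * ut3 (k 3 * x + l 3 * y + m 3 * z) t + m 4 / k 4 * ut4 (k 4 * x + l 4 * y + m 4 * z) t + U0 * (k 1 * (ux1 (k 1 * x + l 1 * y + m 1 * z) t * k 1) + k 2 * (ux2 (k 2 * x + l 2 * y + m 2 * z) t * k 2) + l 3 / k 3 * (ux3 (k 3 * x + l 3 * y + m 3 * z) t * k 3) + m 4 / k 4 * (ux4 (k 4 * x + l 4 * y + m 4 * z) t * k 4)) + (1 / rho0) * (- c0 * rho0 * r_coef k l m 1 * (ux1 (k 1 * x + l 1 * y + m 1 * z) t * k 1) + c0 * rho0 * r_coef k l m 2 * (ux2 (k 2 * x + l 2 * y + m 2 * z) t * k 2) + 0 * (ux3 (k 3 * x + l 3 * y + m 3 * z) t * k 3) + 0 * (ux4 (k 4 * x + l 4 * y + m 4 * z) t * k 4)) = (k 1 * f 1 (k 1 * x + l 1 * y + m 1 * z) + k 2 * f 2 (k 2 * x + l 2 * y + m 2 * z) + l 3 / k 3 * f 3 (k 3 * x + l 3 * y + m 3 * z) + m 4 / k 4 * f 4 (k 4 * x + l 4 * y + m 4 * z)) * sin (omega_f * t)"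
      by (rule PA(1)) (rule pde1 pde2 pde3 pde4)+
    then show ?thesis by (simp add: repF)
  qed
  have WE2: "l 1 * ut1 (k 1 * x + l 1 * y + m 1 * z) t + l 2 * ut2 (k 2 * x + l 2 * y + m 2 * z) t + -1 * ut3 (k 3 * x + l 3 * y + m 3 * z) t + 0 * ut4 (k 4 * x + l 4 * y + m 4 * z) t + U0 * (l 1 * (ux1 (k 1 * x + l 1 * y + m 1 * z) t * k 1) + l 2 * (ux2 (k 2 * x + l 2 * y + m 2 * z) t * k 2) + -1 * (ux3 (k 3 * x + l 3 * y + m 3 * z) t * k 3) + 0 * (ux4 (k 4 * x + l 4 * y + m 4 * z) t * k 4)) + (1 / rho0) * (- c0 * rho0 * r_coef k l m 1 * (ux1 (k 1 * x + l 1 * y + m 1 * z) t * l 1) + c0 * rho0 * r_coef k l m 2 * (ux2 (k 2 * x + l 2 * y + m 2 * z) t * l 2) + 0 * (ux3 (k 3 * x + l 3 * y + m 3 * z) t * l 3) + 0 * (ux4 (k 4 * x + l 4 * y + m 4 * z) t * l 4)) = G x y z * sin (omega_f * t)" for x y z t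
  proof -
    have "l 1 * ut1 (k 1 * x + l 1 * y + m 1 * z) t + l 2 * ut2 (k 2 * x + l 2 * y + m 2 * z) t + -1 * ut3 (k 3 * x + l 3 * y + m 3 * z) t + 0 * ut4 (k 4 * x + l 4 * y + m 4 * z) t + U0 * (l 1 * (ux1 (k 1 * x + l 1 * y + m 1 * z) t * k 1) + l 2 * (ux2 (k 2 * x + l 2 * y + m 2 * z) t * k 2) + -1 * (ux3 (k 3 * x + l 3 * y + m 3 * z) t * k 3) + 0 * (ux4 (k 4 * x + l 4 * y + m 4 * z) t * k 4)) + (1 / rho0) * (- c0 * rho0 * r_coef k l m 1 * (ux1 (k 1 * x + l 1 * y + m 1 * z) t * l 1) + c0 * rho0 * r_coef k l m 2 * (ux2 (k 2 * x + l 2 * y + m 2 * z) t * l 2) + 0 * (ux3 (k 3 * x + l 3 * y + m 3 * z) t * l 3) + 0 * (ux4 (k 4 * x + l 4 * y + m 4 * z) t * l 4)) = (l 1 * f 1 (k 1 * x + l 1 * y + m 1 * z) + l 2 * f 2 (k 2 * x + l 2 * y + m 2 * z) + -1 * f 3 (k 3 * x + l 3 * y + m 3 * z) + 0 * f 4 (k 4 * x + l 4 * y + m 4 * z)) * sin (omega_f * t)"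
      by (rule PA(2)) (rule pde1 pde2 pde3 pde4)+
    then show ?thesis by (simp add: repG)
  qed
  have WE3: "m 1 * ut1 (k 1 * x + l 1 * y + m 1 * z) t + m 2 * ut2 (k 2 * x + l 2 * y + m 2 * z) t + 0 * ut3 (k 3 * x + l 3 * y + m 3 * z) t + -1 * ut4 (k 4 * x + l 4 * y + m 4 * z) t + U0 * (m 1 * (ux1 (k 1 * x + l 1 * y + m 1 * z) t * k 1) + m 2 * (ux2 (k 2 * x + l 2 * y + m 2 * z) t * k 2) + 0 * (ux3 (k 3 * x + l 3 * y + m 3 * z) t * k 3) + -1 * (ux4 (k 4 * x + l 4 * y + m 4 * z) t * k 4)) + (1 / rho0) * (- c0 * rho0 * r_coef k l m 1 * (ux1 (k 1 * x + l 1 * y + m 1 * z) t * m 1) + c0 * rho0 * r_coef k l m 2 * (ux2 (k 2 * x + l 2 * y + m 2 * z) t * m 2) + 0 * (ux3 (k 3 * x + l 3 * y + m 3 * z) t * m 3) + 0 * (ux4 (k 4 * x + l 4 * y + m 4 * z) t * m 4)) = H x y z * sin (omega_f * t)" for x y z t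
  proof -
    have "m 1 * ut1 (k 1 * x + l 1 * y + m 1 * z) t + m 2 * ut2 (k 2 * x + l 2 * y + m 2 * z) t + 0 * ut3 (k 3 * x + l 3 * y + m 3 * z) t + -1 * ut4 (k 4 * x + l 4 * y + m 4 * z) t + U0 * (m 1 * (ux1 (k 1 * x + l 1 * y + m 1 * z) t * k 1) + m 2 * (ux2 (k 2 * x + l 2 * y + m 2 * z) t * k 2) + 0 * (ux3 (k 3 * x + l 3 * y + m 3 * z) t * k 3) + -1 * (ux4 (k 4 * x + l 4 * y + m 4 * z) t * k 4)) + (1 / rho0) * (- c0 * rho0 * r_coef k l m 1 * (ux1 (k 1 * x + l 1 * y + m 1 * z) t * m 1) + c0 * rho0 * r_coef k l m 2 * (ux2 (k 2 * x + l 2 * y + m 2 * z) t * m 2) + 0 * (ux3 (k 3 * x + l 3 * y + m 3 * z) t * m 3) + 0 * (ux4 (k 4 * x + l 4 * y + m 4 * z) t * m 4)) = (m 1 * f 1 (k 1 * x + l 1 * y + m 1 * z) + m 2 * f 2 (k 2 * x + l 2 * y + m 2 * z) + 0 * f 3 (k 3 * x + l 3 * y + m 3 * z) + -1 * f 4 (k 4 * x + l 4 * y + m 4 * z)) * sin (omega_f * t)"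
      by (rule PA(3)) (rule pde1 pde2 pde3 pde4)+
    then show ?thesis by (simp add: repH)
  qed
  have WE4: "- c0 * rho0 * r_coef k l m 1 * ut1 (k 1 * x + l 1 * y + m 1 * z) t + c0 * rho0 * r_coef k l m 2 * ut2 (k 2 * x + l 2 * y + m 2 * z) t + 0 * ut3 (k 3 * x + l 3 * y + m 3 * z) t + 0 * ut4 (k 4 * x + l 4 * y + m 4 * z) t + U0 * (- c0 * rho0 * r_coef k l m 1 * (ux1 (k 1 * x + l 1 * y + m 1 * z) t * k 1) + c0 * rho0 * r_coef k l m 2 * (ux2 (k 2 * x + l 2 * y + m 2 * z) t * k 2) + 0 * (ux3 (k 3 * x + l 3 * y + m 3 * z) t * k 3) + 0 * (ux4 (k 4 * x + l 4 * y + m 4 * z) t * k 4)) + rho0 * c0^2 * ((k 1 * (ux1 (k 1 * x + l 1 * y + m 1 * z) t * k 1) + k 2 * (ux2 (k 2 * x + l 2 * y + m 2 * z) t * k 2) + l 3 / k 3 * (ux3 (k 3 * x + l 3 * y + m 3 * z) t * k 3) + m 4 / k 4 * (ux4 (k 4 * x + l 4 * y + m 4 * z) t * k 4)) + (l 1 * (ux1 (k 1 * x + l 1 * y + m 1 * z) t * l 1) + l 2 * (ux2 (k 2 * x + l 2 * y + m 2 * z) t * l 2) + -1 * (ux3 (k 3 * x + l 3 * y + m 3 * z) t * l 3) + 0 * (ux4 (k 4 * x + l 4 * y + m 4 * z) t * l 4)) + (m 1 * (ux1 (k 1 * x + l 1 * y + m 1 * z) t * m 1) + m 2 * (ux2 (k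 2 * x + l 2 * y + m 2 * z) t * m 2) + 0 * (ux3 (k 3 * x + l 3 * y + m 3 * z) t * m 3) + -1 * (ux4 (k 4 * x + l 4 * y + m 4 * z) t * m 4))) = P x y z * sin (omega_f * t)" for x y z t
  proof -
    have "- c0 * rho0 * r_coef k l m 1 * ut1 (k 1 * x + l 1 * y + m 1 * z) t + c0 * rho0 * r_coef k l m 2 * ut2 (k 2 * x + l 2 * y + m 2 * z) t + 0 * ut3 (k 3 * x + l 3 * y + m 3 * z) t + 0 * ut4 (k 4 * x + l 4 * y + m 4 * z) t + U0 * (- c0 * rho0 * r_coef k l m 1 * (ux1 (k 1 * x + l 1 * y + m 1 * z) t * k 1) + c0 * rho0 * r_coef k l m 2 * (ux2 (k 2 * x + l 2 * y + m 2 * z) t * k 2) + 0 * (ux3 (k 3 * x + l 3 * y + m 3 * z) t * k 3) + 0 * (ux4 (k 4 * x + l 4 * y + m 4 * z) t * k 4)) + rho0 * c0^2 * ((k 1 * (ux1 (k 1 * x + l 1 * y + m 1 * z) t * k 1) + k 2 * (ux2 (k 2 * x + l 2 * y + m 2 * z) t * k 2) + l 3 / k 3 * (ux3 (k 3 * x + l 3 * y + m 3 * z) t * k 3) + m 4 / k 4 * (ux4 (k 4 * x + l 4 * y + m 4 * z) t * k 4)) + (l 1 * (ux1 (k 1 * x + l 1 * y + m 1 * z) t * l 1) + l 2 * (ux2 (k 2 * x + l 2 * y + m 2 * z) t * l 2) + -1 * (ux3 (k 3 * x + l 3 * y + m 3 * z) t * l 3) + 0 * (ux4 (k 4 * x +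 l 4 * y + m 4 * z) t * l 4)) + (m 1 * (ux1 (k 1 * x + l 1 * y + m 1 * z) t * m 1) + m 2 * (ux2 (k 2 * x + l 2 * y + m 2 * z) t * m 2) + 0 * (ux3 (k 3 * x + l 3 * y + m 3 * z) t * m 3) + -1 * (ux4 (k 4 * x + l 4 * y + m 4 * z) t * m 4))) = (- c0 * rho0 * r_coef k l m 1 * f 1 (k 1 * x + l 1 * y + m 1 * z) + c0 * rho0 * r_coef k l m 2 * f 2 (k 2 * x + l 2 * y + m 2 * z) + 0 * f 3 (k 3 * x + l 3 * y + m 3 * z) + 0 * f 4 (k 4 * x + l 4 * y + m 4 * z)) * sin (omega_f * t)"
      by (rule PA(4)) (rule pde1 pde2 pde3 pde4)+
    then show ?thesis by (simp add: repP)
  qed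

  have sA: "pdt vx x y z t + U0 * pdx vx x y z t + (1 / rho0) * pdx p x y z t = F x y z * sin (omega_f * t)"
    and sB: "pdt vy x y z t + U0 * pdx vy x y z t + (1 / rho0) * pdy p x y z t = G x y z * sin (omega_f * t)"
    and sC: "pdt vz x y z t + U0 * pdx vz x y z t + (1 / rho0) * pdz p x y z t = H x y z * sin (omega_f * t)"
    and sD: "pdt p x y z t + U0 * pdx p x y z t + rho0 * c0\<^sup>2 * (pdx vx x y z t + pdy vy x y z t + pdz vz x y z t)
        = P x y z * sin (omega_f * t)" if "t \<ge> 0" for x y z t
    using eqs[of x y z t] that by (auto simp: heaviside_def)
  have UQ: "vx x y z t - (k 1 * u1 (k 1 * x + l 1 * y + m 1 * z) t + k 2 * u2 (k 2 * x + l 2 * y + m 2 * z) t + l 3 / k 3 * u3 (k 3 * x + l 3 * y + m 3 * z) t + m 4 / k 4 * u4 (k 4 * x + l 4 * y + m 4 * z) t) = 0 \<and> vy x y z t - (l 1 * u1 (k 1 * x + l 1 * y + m 1 * z) t + l 2 * u2 (k 2 * x + l 2 * y + m 2 * z) t + -1 * u3 (k 3 * x + l 3 * y + m 3 * z) t + 0 * u4 (k 4 * x + l 4 * y + m 4 * z) t) = 0 \<and> vz x y z t - (m 1 * u1 (k 1 * x + l 1 * y + m 1 * z) t + m 2 * u2 (k 2 * x + l 2 * y + m 2 * z) t + 0 * u3 (k 3 * x + l 3 * y + m 3 * z) t + -1 * u4 (k 4 * x + l 4 * y + m 4 * z) t) = 0 \<and> p x y z t - (- c0 * rho0 * r_coef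 k l m 1 * u1 (k 1 * x + l 1 * y + m 1 * z) t + c0 * rho0 * r_coef k l m 2 * u2 (k 2 * x + l 2 * y + m 2 * z) t + 0 * u3 (k 3 * x + l 3 * y + m 3 * z) t + 0 * u4 (k 4 * x + l 4 * y + m 4 * z) t) = 0"
    if t0: "t \<ge> 0" for x y z t
  proof (rule energy_unique[OF c0 rho0 P4_diff[OF P4_C1[OF Cvx] PWx] P4_diff[OF P4_C1[OF Cvy] PWy]
        P4_diff[OF P4_C1[OF Cvz] PWz] P4_diff[OF P4_C1[OF Cp] PWp], where vU=U0, OF _ _ _ _ _ t0])
    fix x y z t :: real assume "t \<ge> 0"
    show "(pdt vx x y z t - (k 1 * ut1 (k 1 * x + l 1 * y + m 1 * z) t + k 2 * ut2 (k 2 * x + l 2 * y + m 2 * z) t + l 3 / k 3 * ut3 (k 3 * x + l 3 * y + m 3 * z) t + m 4 / k 4 * ut4 (k 4 * x + l 4 * y + m 4 * z) t)) + U0 * (pdx vx x y z t - (k 1 * (ux1 (k 1 * x + l 1 * y + m 1 * z) t * k 1) + k 2 * (ux2 (k 2 * x + l 2 * y + m 2 * z) t * k 2) + l 3 / k 3 * (ux3 (k 3 * x + l 3 * y + m 3 * z) t * k 3) + m 4 / k 4 * (ux4 (k 4 * x + l 4 * y + m 4 * z) t * k 4))) + 1 / rho0 * (pdx p x y z t - (- c0 * rho0 * r_coef k l m 1 * (ux1 (k 1 * x + l 1 * y + m 1 * z) t * k 1) + c0 * rho0 * r_coef k l m 2 * (ux2 (k 2 * x + l 2 * y + m 2 *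 z) t * k 2) + 0 * (ux3 (k 3 * x + l 3 * y + m 3 * z) t * k 3) + 0 * (ux4 (k 4 * x + l 4 * y + m 4 * z) t * k 4))) = 0"
      by (rule lin_sub[OF sA[OF \<open>t \<ge> 0\<close>] WE1])
    show "(pdt vy x y z t - (l 1 * ut1 (k 1 * x + l 1 * y + m 1 * z) t + l 2 * ut2 (k 2 * x + l 2 * y + m 2 * z) t + -1 * ut3 (k 3 * x + l 3 * y + m 3 * z) t + 0 * ut4 (k 4 * x + l 4 * y + m 4 * z) t)) + U0 * (pdx vy x y z t - (l 1 * (ux1 (k 1 * x + l 1 * y + m 1 * z) t * k 1) + l 2 * (ux2 (k 2 * x + l 2 * y + m 2 * z) t * k 2) + -1 * (ux3 (k 3 * x + l 3 * y + m 3 * z) t * k 3) + 0 * (ux4 (k 4 * x + l 4 * y + m 4 * z) t * k 4))) + 1 / rho0 * (pdy p x y z t - (- c0 * rho0 * r_coef k l m 1 * (ux1 (k 1 * x + l 1 * y + m 1 * z) t * l 1) + c0 * rho0 * r_coef k l m 2 * (ux2 (k 2 * x + l 2 * y + m 2 * z) t * l 2) + 0 * (ux3 (k 3 * x + l 3 * y + m 3 * z) t * l 3) + 0 * (ux4 (k 4 * x + l 4 * y + m 4 * z) t * l 4))) = 0"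
      by (rule lin_sub[OF sB[OF \<open>t \<ge> 0\<close>] WE2])
    show "(pdt vz x y z t - (m 1 * ut1 (k 1 * x + l 1 * y + m 1 * z) t + m 2 * ut2 (k 2 * x + l 2 * y + m 2 * z) t + 0 * ut3 (k 3 * x + l 3 * y + m 3 * z) t + -1 * ut4 (k 4 * x + l 4 * y + m 4 * z) t)) + U0 * (pdx vz x y z t - (m 1 * (ux1 (k 1 * x + l 1 * y + m 1 * z) t * k 1) + m 2 * (ux2 (k 2 * x + l 2 * y + m 2 * z) t * k 2) + 0 * (ux3 (k 3 * x + l 3 * y + m 3 * z) t * k 3) + -1 * (ux4 (k 4 * x + l 4 * y + m 4 * z) t * k 4))) + 1 / rho0 * (pdz p x y z t - (- c0 * rho0 * r_coef k l m 1 * (ux1 (k 1 * x + l 1 * y + m 1 * z) t * m 1) + c0 * rho0 * r_coef k l m 2 * (ux2 (k 2 * x + l 2 * y + m 2 * z) t * m 2) + 0 * (ux3 (k 3 * x + l 3 * y + m 3 * z) t * m 3) + 0 * (ux4 (k 4 * x + l 4 * y + m 4 * z) t * m 4))) = 0"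
      by (rule lin_sub[OF sC[OF \<open>t \<ge> 0\<close>] WE3])
    show "(pdt p x y z t - (- c0 * rho0 * r_coef k l m 1 * ut1 (k 1 * x + l 1 * y + m 1 * z) t + c0 * rho0 * r_coef k l m 2 * ut2 (k 2 * x + l 2 * y + m 2 * z) t + 0 * ut3 (k 3 * x + l 3 * y + m 3 * z) t + 0 * ut4 (k 4 * x + l 4 * y + m 4 * z) t)) + U0 * (pdx p x y z t - (- c0 * rho0 * r_coef k l m 1 * (ux1 (k 1 * x + l 1 * y + m 1 * z) t * k 1) + c0 * rho0 * r_coef k l m 2 * (ux2 (k 2 * x + l 2 * y + m 2 * z) t * k 2) + 0 * (ux3 (k 3 * x + l 3 * y + m 3 * z) t * k 3) + 0 * (ux4 (k 4 * x + l 4 * y + m 4 * z) t * k 4))) + rho0 * c0^2 * ((pdx vx x y z t - (k 1 * (ux1 (k 1 * x + l 1 * y + m 1 * z) t * k 1) + k 2 * (ux2 (k 2 * x + l 2 * y + m 2 * z) t * k 2) + l 3 / k 3 * (ux3 (k 3 * x + l 3 * y + m 3 * z) t * k 3) + m 4 / k 4 * (ux4 (k 4 * x + l 4 * y + m 4 * z) t * k 4))) + (pdy vy x y z t - (l 1 * (ux1 (k 1 * x + l 1 * y + m 1 * z) t * l 1) + l 2 * (ux2 (k 2 * x + l 2 * y + m 2 * z) t * l 2) + -1 * (ux3 (k 3 * x + l 3 * y + m 3 * z) t * l 3) + 0 * (ux4 (k 4 * x + l 4 * y + m 4 * z) t * l 4))) + (pdz vz x y z t - (m 1 * (ux1 (k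 1 * x + l 1 * y + m 1 * z) t * m 1) + m 2 * (ux2 (k 2 * x + l 2 * y + m 2 * z) t * m 2) + 0 * (ux3 (k 3 * x + l 3 * y + m 3 * z) t * m 3) + -1 * (ux4 (k 4 * x + l 4 * y + m 4 * z) t * m 4)))) = 0"
      by (rule lin_sub2[OF sD[OF \<open>t \<ge> 0\<close>] WE4])
  next
    fix x y z :: real
    show "vx x y z 0 - (k 1 * u1 (k 1 * x + l 1 * y + m 1 * z) 0 + k 2 * u2 (k 2 * x + l 2 * y + m 2 * z) 0 + l 3 / k 3 * u3 (k 3 * x + l 3 * y + m 3 * z) 0 + m 4 / k 4 * u4 (k 4 * x + l 4 * y + m 4 * z) 0) = 0 \<and> vy x y z 0 - (l 1 * u1 (k 1 * x + l 1 * y + m 1 * z) 0 + l 2 * u2 (k 2 * x + l 2 * y + m 2 * z) 0 + -1 * u3 (k 3 * x + l 3 * y + m 3 * z) 0 + 0 * u4 (k 4 * x + l 4 * y + m 4 * z) 0) = 0 \<and> vz x y z 0 - (m 1 * u1 (k 1 * x + l 1 * y + m 1 * z) 0 + m 2 * u2 (k 2 * x + l 2 * y + m 2 * z) 0 + 0 * u3 (k 3 * x + l 3 * y + m 3 * z) 0 + -1 * u4 (k 4 * x + l 4 * y + m 4 * z) 0) = 0 \<and> p x y z 0 - (- c0 * rho0 * r_coef k l m 1 * u1 (k 1 * x + l 1 * y + m 1 * z) 0 + c0 * rho0 * r_coef k l m 2 * u2 (k 2 * x + l 2 * y + m 2 * z) 0 + 0 * u3 (k 3 * x + l 3 * y +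 m 3 * z) 0 + 0 * u4 (k 4 * x + l 4 * y + m 4 * z) 0) = 0"
      using zero[of 0 x y z] by (simp add: u10 u20 u30 u40)
  qed

  obtain aF where aF: "\<And>x y z. \<bar>F x y z\<bar> \<le> aF"
    using bF(1) unfolding bounded_iff by (metis (no_types, lifting) case_prod_conv rangeI real_norm_def)
  obtain aG where aG: "\<And>x y z. \<bar>G x y z\<bar> \<le> aG"
    using bF(2) unfolding bounded_iff by (metis (no_types, lifting) case_prod_conv rangeI real_norm_def)
  obtain aH where aH: "\<And>x y z. \<bar>H x y z\<bar> \<le> aH"
    using bF(3) unfolding bounded_iff by (metis (no_types, lifting) case_prod_conv rangeI real_norm_def)
  obtain aP where aP: "\<And>x y z. \<bar>P x y z\<bar> \<le> aP"
    using bF(4) unfolding bounded_iff by (metis (no_types, lifting) case_prod_conv rangeI real_norm_def)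
  define BF where "BF = max (max aF aG) (max aH aP)"
  have BF: "\<bar>F x y z\<bar> \<le> BF" "\<bar>G x y z\<bar> \<le> BF" "\<bar>H x y z\<bar> \<le> BF" "\<bar>P x y z\<bar> \<le> BF" for x y z
    using aF[of x y z] aG[of x y z] aH[of x y z] aP[of x y z] unfolding BF_def by auto
  define B1 where "B1 = (\<bar>c0 * rho0 * r_coef k l m 2\<bar> * (1 + \<bar>l 3 / k 3\<bar> + \<bar>m 4 / k 4\<bar>)
      + \<bar>k 2 + l 3 * l 2 / k 3 + m 4 * m 2 / k 4\<bar>) * BF / \<bar>Delta_Z2 c0 rho0 k l m\<bar>"
  define B2 where "B2 = (\<bar>c0 * rho0 * r_coef k l m 1\<bar> * (1 + \<bar>l 3 / k 3\<bar> + \<bar>m 4 / k 4\<bar>)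
      + \<bar>k 1 + l 3 * l 1 / k 3 + m 4 * m 1 / k 4\<bar>) * BF / \<bar>Delta_Z2 c0 rho0 k l m\<bar>"
  define B3 where "B3 = \<bar>l 1\<bar> * B1 + \<bar>l 2\<bar> * B2 + BF"
  define B4 where "B4 = \<bar>m 1\<bar> * B1 + \<bar>m 2\<bar> * B2 + BF"

  have fb: "\<bar>f 1 (k 1 * x + l 1 * y + m 1 * z)\<bar> \<le> B1 \<and> \<bar>f 2 (k 2 * x + l 2 * y + m 2 * z)\<bar> \<le> B2 \<and> \<bar>f 3 (k 3 * x + l 3 * y + m 3 * z)\<bar> \<le> B3 \<and> \<bar>f 4 (k 4 * x + l 4 * y + m 4 * z)\<bar> \<le> B4" for x y z
  proof -
    note iv = inv4[OF k3 k4 Dl repF[of x y z] repG[of x y z] repH[of x y z] repP[of x y z]]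
    have b1: "\<bar>f 1 (k 1 * x + l 1 * y + m 1 * z)\<bar> \<le> B1" unfolding B1_def
      by (subst iv(1), rule lin_bd_minus) (use BF in auto)
    have b2: "\<bar>f 2 (k 2 * x + l 2 * y + m 2 * z)\<bar> \<le> B2" unfolding B2_def
      by (subst iv(2), rule lin_bd) (use BF in auto)
    have "\<bar>l 1 * f 1 (k 1 * x + l 1 * y + m 1 * z)\<bar> \<le> \<bar>l 1\<bar> * B1" using b1 by (simp add: abs_mult mult_left_mono)
    moreover have "\<bar>l 2 * f 2 (k 2 * x + l 2 * y + m 2 * z)\<bar> \<le> \<bar>l 2\<bar> * B2" using b2 by (simp add: abs_mult mult_left_mono)
    moreover have "\<bar>l 1 * f 1 (k 1 * x + l 1 * y + m 1 * z) + l 2 * f 2 (k 2 * x + l 2 * y + m 2 * z) - G x y z\<bar> \<le> \<bar>l 1 * f 1 (k 1 * x + l 1 * y + m 1 * z)\<bar> + \<bar>l 2 * f 2 (k 2 * x + l 2 * y + m 2 * z)\<bar> + \<bar>G x y z\<bar>"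
      using abs3[of "l 1 * f 1 (k 1 * x + l 1 * y + m 1 * z)" "l 2 * f 2 (k 2 * x + l 2 * y + m 2 * z)" "- G x y z"] by simp
    ultimately have b3: "\<bar>f 3 (k 3 * x + l 3 * y + m 3 * z)\<bar> \<le> B3" unfolding B3_def using BF(2)[of x y z] iv(3) by linarith
    have "\<bar>m 1 * f 1 (k 1 * x + l 1 * y + m 1 * z)\<bar> \<le> \<bar>m 1\<bar> * B1" using b1 by (simp add: abs_mult mult_left_mono)
    moreover have "\<bar>m 2 * f 2 (k 2 * x + l 2 * y + m 2 * z)\<bar> \<le> \<bar>m 2\<bar> * B2" using b2 by (simp add: abs_mult mult_left_mono)
    moreover have "\<bar>m 1 * f 1 (k 1 * x + l 1 * y + m 1 * z) + m 2 * f 2 (k 2 * x + l 2 * y + m 2 * z) - H x y z\<bar> \<le> \<bar>m 1 * f 1 (k 1 * x + l 1 * y + m 1 * z)\<bar> + \<bar>m 2 * f 2 (k 2 * x + l 2 * y + m 2 * z)\<bar> + \<bar>H x y z\<bar>"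
      using abs3[of "m 1 * f 1 (k 1 * x + l 1 * y + m 1 * z)" "m 2 * f 2 (k 2 * x + l 2 * y + m 2 * z)" "- H x y z"] by simp
    ultimately have b4: "\<bar>f 4 (k 4 * x + l 4 * y + m 4 * z)\<bar> \<le> B4" unfolding B4_def using BF(3)[of x y z] iv(4) by linarith
    show ?thesis using b1 b2 b3 b4 by blast
  qed

  have fbi1: "\<bar>f 1 \<xi>\<bar> \<le> B1" for \<xi>
    using fb[of "\<xi> / k 1" 0 0] k1 by simp
  have ub1: "\<bar>u1 \<xi> t\<bar> \<le> B1 * (2 / \<bar>omega_f\<bar> + 2 * t)" if "t \<ge> 0" for \<xi> t
    using S1 fbi1 that unfolding sol1d_def by blast
  have B10: "B1 \<ge> 0" using fbi1[of 0] by linarith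

  have fbi2: "\<bar>f 2 \<xi>\<bar> \<le> B2" for \<xi>
    using fb[of "\<xi> / k 2" 0 0] k2 by simp
  have ub2: "\<bar>u2 \<xi> t\<bar> \<le> B2 * (2 / \<bar>omega_f\<bar> + 2 * t)" if "t \<ge> 0" for \<xi> t
    using S2 fbi2 that unfolding sol1d_def by blast
  have B20: "B2 \<ge> 0" using fbi2[of 0] by linarith

  have fbi3: "\<bar>f 3 \<xi>\<bar> \<le> B3" for \<xi>
    using fb[of "\<xi> / k 3" 0 0] k3 by simp
  have ub3: "\<bar>u3 \<xi> t\<bar> \<le> B3 * (2 / \<bar>omega_f\<bar> + 2 * t)" if "t \<ge> 0" for \<xi> t
    using S3 fbi3 that unfolding sol1d_def by blast
  have B30: "B3 \<ge> 0" using fbi3[of 0] by linarith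

  have fbi4: "\<bar>f 4 \<xi>\<bar> \<le> B4" for \<xi>
    using fb[of "\<xi> / k 4" 0 0] k4 by simp
  have ub4: "\<bar>u4 \<xi> t\<bar> \<le> B4 * (2 / \<bar>omega_f\<bar> + 2 * t)" if "t \<ge> 0" for \<xi> t
    using S4 fbi4 that unfolding sol1d_def by blast
  have B40: "B4 \<ge> 0" using fbi4[of 0] by linarith

  have le0x: "comp_growth vx \<le> 0"
  proof (rule comp_growth_le0)
    fix x y z :: real
    define S where "S = \<bar>k 1\<bar> * B1 + \<bar>k 2\<bar> * B2 + \<bar>l 3 / k 3\<bar> * B3 + \<bar>m 4 / k 4\<bar> * B4"
    have S0: "S \<ge> 0" unfolding S_def using B10 B20 B30 B40 by simp
    show "Limsup at_top (\<lambda>t. ereal (ln \<bar>vx x y z t\<bar> / t)) \<le> 0"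
    proof (rule limsup_le0[where K="S * (2 / \<bar>omega_f\<bar> + 2)"])
      fix t :: real assume t: "t \<ge> 0"
      have "vx x y z t = k 1 * u1 (k 1 * x + l 1 * y + m 1 * z) t + k 2 * u2 (k 2 * x + l 2 * y + m 2 * z) t + l 3 / k 3 * u3 (k 3 * x + l 3 * y + m 3 * z) t + m 4 / k 4 * u4 (k 4 * x + l 4 * y + m 4 * z) t" using UQ[OF t, of x y z] by simp
      also have "\<bar>k 1 * u1 (k 1 * x + l 1 * y + m 1 * z) t + k 2 * u2 (k 2 * x + l 2 * y + m 2 * z) t + l 3 / k 3 * u3 (k 3 * x + l 3 * y + m 3 * z) t + m 4 / k 4 * u4 (k 4 * x + l 4 * y + m 4 * z) t\<bar> \<le> S * (2 / \<bar>omega_f\<bar> + 2 * t)"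
        unfolding S_def by (rule lin4_bd) (use ub1 ub2 ub3 ub4 t in auto)
      finally show "\<bar>vx x y z t\<bar> \<le> S * (2 / \<bar>omega_f\<bar> + 2) * (1 + t)"
        using T_bd[OF S0 t, of omega_f] by linarith
    qed
  qed

  have le0y: "comp_growth vy \<le> 0"
  proof (rule comp_growth_le0)
    fix x y z :: real
    define S where "S = \<bar>l 1\<bar> * B1 + \<bar>l 2\<bar> * B2 + \<bar>-1\<bar> * B3 + \<bar>0\<bar> * B4"
    have S0: "S \<ge> 0" unfolding S_def using B10 B20 B30 B40 by simp
    show "Limsup at_top (\<lambda>t. ereal (ln \<bar>vy x y z t\<bar> / t)) \<le> 0"
    proof (rule limsup_le0[where K="S * (2 / \<bar>omega_f\<bar> + 2)"])
      fix t :: real assume t: "t \<ge> 0"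
      have "vy x y z t = l 1 * u1 (k 1 * x + l 1 * y + m 1 * z) t + l 2 * u2 (k 2 * x + l 2 * y + m 2 * z) t + -1 * u3 (k 3 * x + l 3 * y + m 3 * z) t + 0 * u4 (k 4 * x + l 4 * y + m 4 * z) t" using UQ[OF t, of x y z] by simp
      also have "\<bar>l 1 * u1 (k 1 * x + l 1 * y + m 1 * z) t + l 2 * u2 (k 2 * x + l 2 * y + m 2 * z) t + -1 * u3 (k 3 * x + l 3 * y + m 3 * z) t + 0 * u4 (k 4 * x + l 4 * y + m 4 * z) t\<bar> \<le> S * (2 / \<bar>omega_f\<bar> + 2 * t)"
        unfolding S_def by (rule lin4_bd) (use ub1 ub2 ub3 ub4 t in auto)
      finally show "\<bar>vy x y z t\<bar> \<le> S * (2 / \<bar>omega_f\<bar> + 2) * (1 + t)"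
        using T_bd[OF S0 t, of omega_f] by linarith
    qed
  qed

  have le0z: "comp_growth vz \<le> 0"
  proof (rule comp_growth_le0)
    fix x y z :: real
    define S where "S = \<bar>m 1\<bar> * B1 + \<bar>m 2\<bar> * B2 + \<bar>0\<bar> * B3 + \<bar>-1\<bar> * B4"
    have S0: "S \<ge> 0" unfolding S_def using B10 B20 B30 B40 by simp
    show "Limsup at_top (\<lambda>t. ereal (ln \<bar>vz x y z t\<bar> / t)) \<le> 0"
    proof (rule limsup_le0[where K="S * (2 / \<bar>omega_f\<bar> + 2)"])
      fix t :: real assume t: "t \<ge> 0"
      have "vz x y z t = m 1 * u1 (k 1 * x + l 1 * y + m 1 * z) t + m 2 * u2 (k 2 * x + l 2 * y + m 2 * z) t + 0 * u3 (k 3 * x + l 3 * y + m 3 * z) t + -1 * u4 (k 4 * x + l 4 * y + m 4 * z) t" using UQ[OF t, of x y z] by simp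
      also have "\<bar>m 1 * u1 (k 1 * x + l 1 * y + m 1 * z) t + m 2 * u2 (k 2 * x + l 2 * y + m 2 * z) t + 0 * u3 (k 3 * x + l 3 * y + m 3 * z) t + -1 * u4 (k 4 * x + l 4 * y + m 4 * z) t\<bar> \<le> S * (2 / \<bar>omega_f\<bar> + 2 * t)"
        unfolding S_def by (rule lin4_bd) (use ub1 ub2 ub3 ub4 t in auto)
      finally show "\<bar>vz x y z t\<bar> \<le> S * (2 / \<bar>omega_f\<bar> + 2) * (1 + t)"
        using T_bd[OF S0 t, of omega_f] by linarith
    qed
  qed

  have le0p: "comp_growth p \<le> 0"
  proof (rule comp_growth_le0)
    fix x y z :: real
    define S where "S = \<bar>- c0 * rho0 * r_coef k l m 1\<bar> * B1 + \<bar>c0 * rho0 * r_coef k l m 2\<bar> * B2 + \<bar>0\<bar> * B3 + \<bar>0\<bar> * B4"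
    have S0: "S \<ge> 0" unfolding S_def using B10 B20 B30 B40 by simp
    show "Limsup at_top (\<lambda>t. ereal (ln \<bar>p x y z t\<bar> / t)) \<le> 0"
    proof (rule limsup_le0[where K="S * (2 / \<bar>omega_f\<bar> + 2)"])
      fix t :: real assume t: "t \<ge> 0"
      have "p x y z t = - c0 * rho0 * r_coef k l m 1 * u1 (k 1 * x + l 1 * y + m 1 * z) t + c0 * rho0 * r_coef k l m 2 * u2 (k 2 * x + l 2 * y + m 2 * z) t + 0 * u3 (k 3 * x + l 3 * y + m 3 * z) t + 0 * u4 (k 4 * x + l 4 * y + m 4 * z) t" using UQ[OF t, of x y z] by simp
      also have "\<bar>- c0 * rho0 * r_coef k l m 1 * u1 (k 1 * x + l 1 * y + m 1 * z) t + c0 * rho0 * r_coef k l m 2 * u2 (k 2 * x + l 2 * y + m 2 * z) t + 0 * u3 (k 3 * x + l 3 * y + m 3 * z) t + 0 * u4 (k 4 * x + l 4 * y + m 4 * z) t\<bar> \<le> S * (2 / \<bar>omega_f\<bar> + 2 * t)"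
        unfolding S_def by (rule lin4_bd) (use ub1 ub2 ub3 ub4 t in auto)
      finally show "\<bar>p x y z t\<bar> \<le> S * (2 / \<bar>omega_f\<bar> + 2) * (1 + t)"
        using T_bd[OF S0 t, of omega_f] by linarith
    qed
  qed

  have low: "0 \<le> comp_growth vx \<or> 0 \<le> comp_growth vy \<or> 0 \<le> comp_growth vz \<or> 0 \<le> comp_growth p"
  proof (rule ccontr)
    assume "\<not> ?thesis"
    then have n1: "comp_growth vx < 0" and n2: "comp_growth vy < 0" and n3: "comp_growth vz < 0"
      and n4: "comp_growth p < 0" by auto
    have z0: "vx 0 0 0 t = 0" if "t \<ge> 0" for t
    proof (cases "omega_f = 0")
      case True
      have "vx x y z t = 0 \<and> vy x y z t = 0 \<and> vz x y z t = 0 \<and> p x y z t = 0" if t0: "t \<ge> 0" for x y z t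
      proof (rule energy_unique[OF c0 rho0 P4_C1[OF Cvx] P4_C1[OF Cvy] P4_C1[OF Cvz] P4_C1[OF Cp],
            where vU=U0, OF _ _ _ _ _ t0])
        fix x y z t :: real assume "t \<ge> 0"
        show "pdt vx x y z t + U0 * pdx vx x y z t + 1 / rho0 * pdx p x y z t = 0"
          using sA[OF \<open>t \<ge> 0\<close>] True by simp
        show "pdt vy x y z t + U0 * pdx vy x y z t + 1 / rho0 * pdy p x y z t = 0"
          using sB[OF \<open>t \<ge> 0\<close>] True by simp
        show "pdt vz x y z t + U0 * pdx vz x y z t + 1 / rho0 * pdz p x y z t = 0"
          using sC[OF \<open>t \<ge> 0\<close>] True by simp
        show "pdt p x y z t + U0 * pdx p x y z t + rho0 * c0\<^sup>2 * (pdx vx x y z t + pdy vy x y z t + pdz vz x y z t) = 0"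
          using sD[OF \<open>t \<ge> 0\<close>] True by simp
      next
        fix x y z :: real
        show "vx x y z 0 = 0 \<and> vy x y z 0 = 0 \<and> vz x y z 0 = 0 \<and> p x y z 0 = 0" using zero[of 0] by simp
      qed
      then show ?thesis using that by blast
    next
      case False
      have tv1: "((\<lambda>t. vx x y z t) \<longlongrightarrow> 0) at_top" for x y z
        by (rule limsup_neg_tendsto[OF le_less_trans[OF comp_growth_ge n1]])
      have tv2: "((\<lambda>t. vy x y z t) \<longlongrightarrow> 0) at_top" for x y z
        by (rule limsup_neg_tendsto[OF le_less_trans[OF comp_growth_ge n2]])
      have tv3: "((\<lambda>t. vz x y z t) \<longlongrightarrow> 0) at_top" for x y z
        by (rule limsup_neg_tendsto[OF le_less_trans[OF comp_growth_ge n3]])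
      have tv4: "((\<lambda>t. p x y z t) \<longlongrightarrow> 0) at_top" for x y z
        by (rule limsup_neg_tendsto[OF le_less_trans[OF comp_growth_ge n4]])

      have tE1: "((\<lambda>t. ((c0 * rho0 * r_coef k l m 2 * (vx x y z t + l 3 / k 3 * vy x y z t + m 4 / k 4 * vz x y z t) - (k 2 + l 3 * l 2 / k 3 + m 4 * m 2 / k 4) * p x y z t) / Delta_Z2 c0 rho0 k l m)) \<longlongrightarrow> 0) at_top" for x y z
      proof -
        have "((\<lambda>t. ((c0 * rho0 * r_coef k l m 2 * (vx x y z t + l 3 / k 3 * vy x y z t + m 4 / k 4 * vz x y z t) - (k 2 + l 3 * l 2 / k 3 + m 4 * m 2 / k 4) * p x y z t) / Delta_Z2 c0 rho0 k l m)) \<longlongrightarrow> ((c0 * rho0 * r_coef k l m 2 * (0 + l 3 / k 3 * 0 + m 4 / k 4 * 0) - (k 2 + l 3 * l 2 / k 3 + m 4 * m 2 / k 4) * 0) / Delta_Z2 c0 rho0 k l m)) at_top"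
          by (intro tendsto_intros tv1 tv2 tv3 tv4 Dl)
        then show ?thesis by simp
      qed

      have tE2: "((\<lambda>t. ((c0 * rho0 * r_coef k l m 1 * (vx x y z t + l 3 / k 3 * vy x y z t + m 4 / k 4 * vz x y z t) + (k 1 + l 3 * l 1 / k 3 + m 4 * m 1 / k 4) * p x y z t) / Delta_Z2 c0 rho0 k l m)) \<longlongrightarrow> 0) at_top" for x y z
      proof -
        have "((\<lambda>t. ((c0 * rho0 * r_coef k l m 1 * (vx x y z t + l 3 / k 3 * vy x y z t + m 4 / k 4 * vz x y z t) + (k 1 + l 3 * l 1 / k 3 + m 4 * m 1 / k 4) * p x y z t) / Delta_Z2 c0 rho0 k l m)) \<longlongrightarrow> ((c0 * rho0 * r_coef k l m 1 * (0 + l 3 / k 3 * 0 + m 4 / k 4 * 0) + (k 1 + l 3 * l 1 / k 3 + m 4 * m 1 / k 4) * 0) / Delta_Z2 c0 rho0 k l m)) at_top"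
          by (intro tendsto_intros tv1 tv2 tv3 tv4 Dl)
        then show ?thesis by simp
      qed

      have tE3: "((\<lambda>t. (l 1 * ((c0 * rho0 * r_coef k l m 2 * (vx x y z t + l 3 / k 3 * vy x y z t + m 4 / k 4 * vz x y z t) - (k 2 + l 3 * l 2 / k 3 + m 4 * m 2 / k 4) * p x y z t) / Delta_Z2 c0 rho0 k l m) + l 2 * ((c0 * rho0 * r_coef k l m 1 * (vx x y z t + l 3 / k 3 * vy x y z t + m 4 / k 4 * vz x y z t) + (k 1 + l 3 * l 1 / k 3 + m 4 * m 1 / k 4) * p x y z t) / Delta_Z2 c0 rho0 k l m) - vy x y z t)) \<longlongrightarrow> 0) at_top" for x y z
      proof -
        have "((\<lambda>t. (l 1 * ((c0 * rho0 * r_coef k l m 2 * (vx x y z t + l 3 / k 3 * vy x y z t + m 4 / k 4 * vz x y z t) - (k 2 + l 3 * l 2 / k 3 + m 4 * m 2 / k 4) * p x y z t) / Delta_Z2 c0 rho0 k l m) + l 2 * ((c0 * rho0 * r_coef k l m 1 * (vx x y z t + l 3 / k 3 * vy x y z t + m 4 / k 4 * vz x y z t) + (k 1 + l 3 * l 1 / k 3 + m 4 * m 1 / k 4) * p x y z t) / Delta_Z2 c0 rho0 k l m) - vy x y z t)) \<longlongrightarrow> (l 1 * ((c0 * rho0 * r_coef k l m 2 * (0 + l 3 / k 3 * 0 + m 4 / k 4 * 0) - (k 2 + l 3 * l 2 / k 3 + m 4 * m 2 / k 4) * 0) / Delta_Z2 c0 rho0 k l m) + l 2 * ((c0 * rho0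 * r_coef k l m 1 * (0 + l 3 / k 3 * 0 + m 4 / k 4 * 0) + (k 1 + l 3 * l 1 / k 3 + m 4 * m 1 / k 4) * 0) / Delta_Z2 c0 rho0 k l m) - 0)) at_top"
          by (intro tendsto_intros tv1 tv2 tv3 tv4 Dl)
        then show ?thesis by simp
      qed

      have tE4: "((\<lambda>t. (m 1 * ((c0 * rho0 * r_coef k l m 2 * (vx x y z t + l 3 / k 3 * vy x y z t + m 4 / k 4 * vz x y z t) - (k 2 + l 3 * l 2 / k 3 + m 4 * m 2 / k 4) * p x y z t) / Delta_Z2 c0 rho0 k l m) + m 2 * ((c0 * rho0 * r_coef k l m 1 * (vx x y z t + l 3 / k 3 * vy x y z t + m 4 / k 4 * vz x y z t) + (k 1 + l 3 * l 1 / k 3 + m 4 * m 1 / k 4) * p x y z t) / Delta_Z2 c0 rho0 k l m) - vz x y z t)) \<longlongrightarrow> 0) at_top" for x y z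
      proof -
        have "((\<lambda>t. (m 1 * ((c0 * rho0 * r_coef k l m 2 * (vx x y z t + l 3 / k 3 * vy x y z t + m 4 / k 4 * vz x y z t) - (k 2 + l 3 * l 2 / k 3 + m 4 * m 2 / k 4) * p x y z t) / Delta_Z2 c0 rho0 k l m) + m 2 * ((c0 * rho0 * r_coef k l m 1 * (vx x y z t + l 3 / k 3 * vy x y z t + m 4 / k 4 * vz x y z t) + (k 1 + l 3 * l 1 / k 3 + m 4 * m 1 / k 4) * p x y z t) / Delta_Z2 c0 rho0 k l m) - vz x y z t)) \<longlongrightarrow> (m 1 * ((c0 * rho0 * r_coef k l m 2 * (0 + l 3 / k 3 * 0 + m 4 / k 4 * 0) - (k 2 + l 3 * l 2 / k 3 + m 4 * m 2 / k 4) * 0) / Delta_Z2 c0 rho0 k l m) + m 2 * ((c0 * rho0 * r_coef k l m 1 * (0 + l 3 / k 3 * 0 + m 4 / k 4 * 0) + (k 1 + l 3 * l 1 / k 3 + m 4 * m 1 / k 4) * 0) / Delta_Z2 c0 rho0 k l m) - 0)) at_top"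
          by (intro tendsto_intros tv1 tv2 tv3 tv4 Dl)
        then show ?thesis by simp
      qed

      have evU: "u1 (k 1 * x + l 1 * y + m 1 * z) t = ((c0 * rho0 * r_coef k l m 2 * (vx x y z t + l 3 / k 3 * vy x y z t + m 4 / k 4 * vz x y z t) - (k 2 + l 3 * l 2 / k 3 + m 4 * m 2 / k 4) * p x y z t) / Delta_Z2 c0 rho0 k l m) \<and> u2 (k 2 * x + l 2 * y + m 2 * z) t = ((c0 * rho0 * r_coef k l m 1 * (vx x y z t + l 3 / k 3 * vy x y z t + m 4 / k 4 * vz x y z t) + (k 1 + l 3 * l 1 / k 3 + m 4 * m 1 / k 4) * p x y z t) / Delta_Z2 c0 rho0 k l m) \<and> u3 (k 3 * x + l 3 * y + m 3 * z) t = (l 1 * ((c0 * rho0 * r_coef k l m 2 * (vx x y z t + l 3 / k 3 * vy x y z t + m 4 / k 4 * vz x y z t) - (k 2 + l 3 * l 2 / k 3 + m 4 * m 2 / k 4) * p x y z t) / Delta_Z2 c0 rho0 k l m) + l 2 * ((c0 * rho0 * r_coef k l m 1 * (vx x y z t + l 3 / k 3 * vy x y z t + m 4 / k 4 * vz x y z t) + (k 1 + l 3 * l 1 / k 3 + m 4 * m 1 / k 4) * p x y z t) / Delta_Z2 c0 rho0 k l m) - vy x y z t) \<and> u4 (k 4 * x + l 4 * y + m 4 * z) t = (m 1 * ((c0 * rho0 * r_coef k l m 2 * (vx x y z t + l 3 / k 3 * vy x y z t + m 4 / k 4 * vz x y z t) - (k 2 + l 3 * l 2 / k 3 + m 4 *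 m 2 / k 4) * p x y z t) / Delta_Z2 c0 rho0 k l m) + m 2 * ((c0 * rho0 * r_coef k l m 1 * (vx x y z t + l 3 / k 3 * vy x y z t + m 4 / k 4 * vz x y z t) + (k 1 + l 3 * l 1 / k 3 + m 4 * m 1 / k 4) * p x y z t) / Delta_Z2 c0 rho0 k l m) - vz x y z t)"
        if t: "t \<ge> 0" for x y z t
      proof -
        have ex: "vx x y z t = k 1 * u1 (k 1 * x + l 1 * y + m 1 * z) t + k 2 * u2 (k 2 * x + l 2 * y + m 2 * z) t + l 3 / k 3 * u3 (k 3 * x + l 3 * y + m 3 * z) t + m 4 / k 4 * u4 (k 4 * x + l 4 * y + m 4 * z) t"
          and ey: "vy x y z t = l 1 * u1 (k 1 * x + l 1 * y + m 1 * z) t + l 2 * u2 (k 2 * x + l 2 * y + m 2 * z) t - u3 (k 3 * x + l 3 * y + m 3 * z) t"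
          and ez: "vz x y z t = m 1 * u1 (k 1 * x + l 1 * y + m 1 * z) t + m 2 * u2 (k 2 * x + l 2 * y + m 2 * z) t - u4 (k 4 * x + l 4 * y + m 4 * z) t"
          and ep: "p x y z t = - c0 * rho0 * r_coef k l m 1 * u1 (k 1 * x + l 1 * y + m 1 * z) t + c0 * rho0 * r_coef k l m 2 * u2 (k 2 * x + l 2 * y + m 2 * z) t"
          using UQ[OF t, of x y z] by simp_all
        note iv = inv4[OF k3 k4 Dl ex ey ez ep]
        show ?thesis using iv by simp
      qed

      have tu1: "((\<lambda>t. u1 \<xi> t) \<longlongrightarrow> 0) at_top" for \<xi>
      proof -
        have "\<forall>\<^sub>F t in at_top. ((c0 * rho0 * r_coef k l m 2 * (vx (\<xi> / k 1) 0 0 t + l 3 / k 3 * vy (\<xi> / k 1) 0 0 t + m 4 / k 4 * vz (\<xi> / k 1) 0 0 t) - (k 2 + l 3 * l 2 / k 3 + m 4 * m 2 / k 4) * p (\<xi> / k 1) 0 0 t) / Delta_Z2 c0 rho0 k l m) = u1 \<xi> t"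
          by (rule eventually_mono[OF eventually_ge_at_top[of 0]]) (use evU[of _ "\<xi> / k 1" 0 0] k1 in simp)
        from tendsto_cong[OF this] tE1[of "\<xi> / k 1" 0 0] show ?thesis by simp
      qed
      have f1z: "f 1 \<xi> = 0" for \<xi> using S1 False tu1 unfolding sol1d_def by blast
      have u1z: "u1 \<xi> t = 0" if "t \<ge> 0" for \<xi> t
        using S1 f1z that unfolding sol1d_def by (metis abs_le_zero_iff abs_zero mult_zero_left order_refl)

      have tu2: "((\<lambda>t. u2 \<xi> t) \<longlongrightarrow> 0) at_top" for \<xi>
      proof -
        have "\<forall>\<^sub>F t in at_top. ((c0 * rho0 * r_coef k l m 1 * (vx (\<xi> / k 2) 0 0 t + l 3 / k 3 * vy (\<xi> / k 2) 0 0 t + m 4 / k 4 * vz (\<xi> / k 2) 0 0 t) + (k 1 + l 3 * l 1 / k 3 + m 4 * m 1 / k 4) * p (\<xi> / k 2) 0 0 t) / Delta_Z2 c0 rho0 k l m) = u2 \<xi> t"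
          by (rule eventually_mono[OF eventually_ge_at_top[of 0]]) (use evU[of _ "\<xi> / k 2" 0 0] k2 in simp)
        from tendsto_cong[OF this] tE2[of "\<xi> / k 2" 0 0] show ?thesis by simp
      qed
      have f2z: "f 2 \<xi> = 0" for \<xi> using S2 False tu2 unfolding sol1d_def by blast
      have u2z: "u2 \<xi> t = 0" if "t \<ge> 0" for \<xi> t
        using S2 f2z that unfolding sol1d_def by (metis abs_le_zero_iff abs_zero mult_zero_left order_refl)

      have tu3: "((\<lambda>t. u3 \<xi> t) \<longlongrightarrow> 0) at_top" for \<xi>
      proof -
        have "\<forall>\<^sub>F t in at_top. (l 1 * ((c0 * rho0 * r_coef k l m 2 * (vx (\<xi> / k 3) 0 0 t + l 3 / k 3 * vy (\<xi> / k 3) 0 0 t + m 4 / k 4 * vz (\<xi> / k 3) 0 0 t) - (k 2 + l 3 * l 2 / k 3 + m 4 * m 2 / k 4) * p (\<xi> / k 3) 0 0 t) / Delta_Z2 c0 rho0 k l m) + l 2 * ((c0 * rho0 * r_coef k l m 1 * (vx (\<xi> / k 3) 0 0 t + l 3 / k 3 * vy (\<xi> / k 3) 0 0 t + m 4 / k 4 * vz (\<xi> / k 3) 0 0 t) + (k 1 + l 3 * l 1 / k 3 + m 4 * m 1 / k 4) * p (\<xi> / k 3) 0 0 t) / Delta_Z2 c0 rho0 k l m) - vy (\<xi> / k 3) 0 0 t) = u3 \<xi> t"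
          by (rule eventually_mono[OF eventually_ge_at_top[of 0]]) (use evU[of _ "\<xi> / k 3" 0 0] k3 in simp)
        from tendsto_cong[OF this] tE3[of "\<xi> / k 3" 0 0] show ?thesis by simp
      qed
      have f3z: "f 3 \<xi> = 0" for \<xi> using S3 False tu3 unfolding sol1d_def by blast
      have u3z: "u3 \<xi> t = 0" if "t \<ge> 0" for \<xi> t
        using S3 f3z that unfolding sol1d_def by (metis abs_le_zero_iff abs_zero mult_zero_left order_refl)

      have tu4: "((\<lambda>t. u4 \<xi> t) \<longlongrightarrow> 0) at_top" for \<xi>
      proof -
        have "\<forall>\<^sub>F t in at_top. (m 1 * ((c0 * rho0 * r_coef k l m 2 * (vx (\<xi> / k 4) 0 0 t + l 3 / k 3 * vy (\<xi> / k 4) 0 0 t + m 4 / k 4 * vz (\<xi> / k 4) 0 0 t) - (k 2 + l 3 * l 2 / k 3 + m 4 * m 2 / k 4) * p (\<xi> / k 4) 0 0 t) / Delta_Z2 c0 rho0 k l m) + m 2 * ((c0 * rho0 * r_coef k l m 1 * (vx (\<xi> / k 4) 0 0 t + l 3 / k 3 * vy (\<xi> / k 4) 0 0 t + m 4 / k 4 * vz (\<xi> / k 4) 0 0 t) + (k 1 + l 3 * l 1 / k 3 + m 4 * m 1 / k 4) * p (\<xi> / k 4) 0 0 t) / Delta_Z2 c0 rho0 k l m) - vz (\<xi> / k 4) 0 0 t) = u4 \<xi> t"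
          by (rule eventually_mono[OF eventually_ge_at_top[of 0]]) (use evU[of _ "\<xi> / k 4" 0 0] k4 in simp)
        from tendsto_cong[OF this] tE4[of "\<xi> / k 4" 0 0] show ?thesis by simp
      qed
      have f4z: "f 4 \<xi> = 0" for \<xi> using S4 False tu4 unfolding sol1d_def by blast
      have u4z: "u4 \<xi> t = 0" if "t \<ge> 0" for \<xi> t
        using S4 f4z that unfolding sol1d_def by (metis abs_le_zero_iff abs_zero mult_zero_left order_refl)

      show ?thesis using UQ[OF that, of 0 0 0] u1z u2z u3z u4z that by simp
    qed
    have "Limsup at_top (\<lambda>t. ereal (ln \<bar>vx 0 0 0 t\<bar> / t)) = 0" by (rule limsup_eq0[OF z0])
    with comp_growth_ge[of vx 0 0 0] n1 show False by simp
  qed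
  show ?thesis unfolding growth_rate_def by (rule growth_max0[OF le0x le0y le0z le0p low])
qed

end
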